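(* For any positive integer $M$, the algorithm $\mathbf{Est\_Amp}(\mathcal A,\chi,M)$ outputs $\tilde a\in[0,1]$ such that for any positive integer $k$, $$|\tilde a-a|\le 2\pi k\frac{\sqrt{a(1-a)}}{M}+k^2\frac{\pi^2}{M^2}$$ with probability at least $8/\pi^2$ when $k=1$, and with probability greater than $1-\frac{1}{2(k-1)}$ when $k\ge2$. If $a=0$ then $\tilde a=0$ with certainty, and if $a=1$ and $M$ is even then $\tilde a=1$ with certainty.
   Context: Let $\mathcal H$ be a finite-dimensional Hilbert space with a fixed orthonormal computational basis $\{|x\rangle\}$ indexed by a finite set of nonnegative integers containing $0$. Let $\chi:\mathbb Z\to\{0,1\}$ be a Boolean function; a basis state $|x\rangle$ is good if $\chi(x)=1$. For a state $|\Upsilon\rangle$, let $|\Upsilon_1\rangle$ be its orthogonal projection onto the span of the good basis states. Let $\mathcal A$ be a unitary on $\mathcal H$, $|\Psi\rangle=\mathcal A|0\rangle$, $a=\langle\Psi_1|\Psi_1\rangle$. Let $\mathbf S_\chi|x\rangle=(-1)^{\chi(x)}|x\rangle$, $\mathbf S_0$ the unitary negating $|0\rangle$ and fixing all other basis states, and $\mathbf Q=-\mathcal A\mathbf S_0\mathcal A^{-1}\mathbf S_\chi$. For $M\ge1$, $\mathbf F_M|x\rangle=\frac{1}{\sqrt M}\sum_{y=0}^{M-1}e^{2\pi ixy/M}|y\rangle$ on an $M$-dimensional register with basis $|0\rangle,\dots,|M-1\rangle$, and for a unitary $\mathbf U$, $\Lambda_M(\mathbf U)$ is the unitary $|j\rangle|y\rangle\mapsto|j\rangle(\mathbf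 U^j|y\rangle)$ for $0\le j<M$. Algorithm $\mathbf{Est\_Amp}(\mathcal A,\chi,M)$: (1) prepare the state $|0\rangle\otimes\mathcal A|0\rangle$ (first register $M$-dimensional, second in $\mathcal H$); (2) apply $\mathbf F_M$ to the first register; (3) apply $\Lambda_M(\mathbf Q)$; (4) apply $\mathbf F_M^{-1}$ to the first register; (5) measure the first register in the computational basis, obtaining $y$; (6) output $\tilde a=\sin^2(\pi y/M)$. *)

theory Defs
  imports Complex_Main
begin

text \<open>The Hilbert space H has computational basis indexed by a finite set
  B of natural numbers with 0 in B. Vectors are functions nat => complex (only the
  values on B matter); operators are matrices nat => nat => complex acting by summation
  over B. The joint space (M-dimensional register times H) has basis indexed by pairs
  (j, x) with j < M and x in B.\<close>

type_synonym vec = "nat \<Rightarrow> complex"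
type_synonym mat = "nat \<Rightarrow> nat \<Rightarrow> complex"
type_synonym jvec = "nat \<times> nat \<Rightarrow> complex"

definition inner_on :: "nat set \<Rightarrow> vec \<Rightarrow> vec \<Rightarrow> complex" where
  "inner_on B u v = (\<Sum>x\<in>B. cnj (u x) * v x)"

definition mat_app :: "nat set \<Rightarrow> mat \<Rightarrow> vec \<Rightarrow> vec" where
  "mat_app B U v = (\<lambda>x. \<Sum>y\<in>B. U x y * v y)"

definition adjoint :: "mat \<Rightarrow> mat" where
  "adjoint U = (\<lambda>x y. cnj (U y x))"

definition unitary_on :: "nat set \<Rightarrow> mat \<Rightarrow> bool" where
  "unitary_on B U \<longleftrightarrow>
     (\<forall>x\<in>B. \<forall>y\<in>B. (\<Sum>z\<in>B. cnj (U z x) * U z y) = (if x = y then 1 else 0)) \<and>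
     (\<forall>x\<in>B. \<forall>y\<in>B. (\<Sum>z\<in>B. U x z * cnj (U y z)) = (if x = y then 1 else 0))"

definition ket :: "nat \<Rightarrow> vec" where
  "ket a = (\<lambda>x. if x = a then 1 else 0)"

definition S_chi :: "(int \<Rightarrow> nat) \<Rightarrow> vec \<Rightarrow> vec" where
  "S_chi \<chi> v = (\<lambda>x. (-1) ^ \<chi> (int x) * v x)"

definition S_zero :: "vec \<Rightarrow> vec" where
  "S_zero v = (\<lambda>x. if x = 0 then - v x else v x)"

text \<open>Q = - A S_0 A^{-1} S_chi; for the unitary A the inverse is the adjoint.\<close>
definition Q_op :: "nat set \<Rightarrow> mat \<Rightarrow> (int \<Rightarrow> nat) \<Rightarrow> vec \<Rightarrow> vec" where
  "Q_op B A \<chi> v = (\<lambda>x. - mat_app B A (S_zero (mat_app B (adjoint A) (S_chi \<chi> v))) x)"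

definition Psi :: "nat set \<Rightarrow> mat \<Rightarrow> vec" where
  "Psi B A = mat_app B A (ket 0)"

definition good_part :: "(int \<Rightarrow> nat) \<Rightarrow> vec \<Rightarrow> vec" where
  "good_part \<chi> v = (\<lambda>x. if \<chi> (int x) = 1 then v x else 0)"

definition amp :: "nat set \<Rightarrow> mat \<Rightarrow> (int \<Rightarrow> nat) \<Rightarrow> real" where
  "amp B A \<chi> = Re (inner_on B (good_part \<chi> (Psi B A)) (good_part \<chi> (Psi B A)))"

definition QFT :: "nat \<Rightarrow> mat" where
  "QFT M = (\<lambda>y x. exp (2 * of_real pi * \<i> * of_nat x * of_nat y / of_nat M) / of_real (sqrt (real M)))"

definition QFT_inv :: "nat \<Rightarrow> mat" where
  "QFT_inv M = adjoint (QFT M)"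

definition on_first :: "nat \<Rightarrow> mat \<Rightarrow> jvec \<Rightarrow> jvec" where
  "on_first M U \<psi> = (\<lambda>(y, x). \<Sum>j<M. U y j * \<psi> (j, x))"

definition Lambda :: "(vec \<Rightarrow> vec) \<Rightarrow> jvec \<Rightarrow> jvec" where
  "Lambda U \<psi> = (\<lambda>(j, x). (U ^^ j) (\<lambda>x'. \<psi> (j, x')) x)"

definition init_state :: "nat set \<Rightarrow> mat \<Rightarrow> jvec" where
  "init_state B A = (\<lambda>(j, x). ket 0 j * Psi B A x)"

definition final_state :: "nat set \<Rightarrow> mat \<Rightarrow> (int \<Rightarrow> nat) \<Rightarrow> nat \<Rightarrow> jvec" where
  "final_state B A \<chi> M =
     on_first M (QFT_inv M) (Lambda (Q_op B A \<chi>) (on_first M (QFT M) (init_state B A)))"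

definition meas_prob :: "nat set \<Rightarrow> mat \<Rightarrow> (int \<Rightarrow> nat) \<Rightarrow> nat \<Rightarrow> nat \<Rightarrow> real" where
  "meas_prob B A \<chi> M y = (\<Sum>x\<in>B. (cmod (final_state B A \<chi> M (y, x)))\<^sup>2)"

definition est_output :: "nat \<Rightarrow> nat \<Rightarrow> real" where
  "est_output M y = (sin (pi * real y / real M))\<^sup>2"

definition est_prob :: "nat set \<Rightarrow> mat \<Rightarrow> (int \<Rightarrow> nat) \<Rightarrow> nat \<Rightarrow> (real \<Rightarrow> bool) \<Rightarrow> real" where
  "est_prob B A \<chi> M P = (\<Sum>y\<in>{y. y < M \<and> P (est_output M y)}. meas_prob B A \<chi> M y)"

end

theory Submission
  imports Defs "HOL-Analysis.Complex_Transcendental"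
begin

unbundle no vec_syntax


lemma cos_lb: "cos (x::real) \<ge> 1 - x^2/2"
proof -
  have "cos x = cos (2*(x/2))" by simp
  also have "\<dots> = 1 - 2 * (sin (x/2))^2" by (rule cos_double_sin)
  finally have c: "cos x = 1 - 2 * (sin (x/2))^2" .
  have "\<bar>sin (x/2)\<bar> \<le> \<bar>x/2\<bar>" by (rule abs_sin_x_le_abs_x)
  hence "(sin (x/2))^2 \<le> (x/2)^2"
    by (metis abs_le_square_iff)
  thus ?thesis using c by (simp add: power_divide)
qed

lemma sin_lb: assumes "0 \<le> (x::real)" shows "sin x \<ge> x - x^3/6"
proof -
  let ?f = "\<lambda>x::real. sin x - x + x^3/6"
  have "?f 0 \<le> ?f x"
  proof (rule DERIV_nonneg_imp_nondecreasing[OF assms])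
    fix y :: real assume "0 \<le> y" "y \<le> x"
    show "\<exists>d. (?f has_real_derivative d) (at y) \<and> 0 \<le> d"
      apply (rule exI[of _ "cos y - 1 + y^2/2"])
      using cos_lb[of y] by (auto intro!: derivative_eq_intros simp: power2_eq_square)
  qed
  thus ?thesis by simp
qed

lemma jordan: assumes "0 \<le> (x::real)" "x \<le> pi/2" shows "sin x \<ge> 2*x/pi"
proof (cases "x \<le> 1")
  case True
  have p: "pi \<ge> 314/100" using pi_approx by simp
  have "2/pi \<le> 2/(314/100)" using p by (intro divide_left_mono) auto
  also have "\<dots> \<le> 1 - x^2/6"
  proof -
    have "x^2 \<le> 1" using True assms by (simp add: power_le_one)
    thus ?thesis by simp
  qed
  finally have "2*x/pi \<le> x*(1 - x^2/6)" using assms(1)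
    by (metis mult.commute mult_left_mono times_divide_eq_right)
  also have "\<dots> \<le> sin x" using sin_lb[OF assms(1)] by (simp add: algebra_simps power3_eq_cube power2_eq_square)
  finally show ?thesis .
next
  case False
  have p: "pi \<ge> 314/100" "pi \<le> 315/100" using pi_approx by simp_all
  define u where "u = pi/2 - x"
  have u: "0 \<le> u" "u \<le> pi/2 - 1" using assms False by (auto simp: u_def)
  have "sin x = cos u" by (simp add: u_def cos_diff)
  also have "\<dots> \<ge> 1 - u^2/2" by (rule cos_lb)
  finally have s: "sin x \<ge> 1 - u^2/2" .
  have "u * u \<le> u * (4/pi)"
  proof (rule mult_left_mono[OF _ u(1)])
    have "pi/2 - 1 \<le> 4/pi"
    proof -
      have h: "pi*pi \<le> pi*(315/100)" by (rule mult_left_mono[OF p(2)]) simp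
      have "pi * (pi/2 - 1) = pi*pi/2 - pi" by (simp add: algebra_simps)
      hence "pi * (pi/2 - 1) \<le> 4" using h p by linarith
      thus ?thesis using pi_gt_zero by (simp add: field_simps)
    qed
    thus "u \<le> 4/pi" using u by linarith
  qed
  hence "1 - u^2/2 \<ge> 2*x/pi"
    unfolding u_def using pi_gt_zero by (simp add: field_simps power2_eq_square)
  with s show ?thesis by linarith
qed



lemma polyB: assumes "0 \<le> (r::real)" "r \<le> 1/2"
  shows "(157/100)^2 * (1 - 5/6* r^2) * (2 - 2* r + r^2) - (2 - r)^2 \<ge> 0"
proof -
  have e: "(157/100)^2 * (1 - 5/6* r^2) * (2 - 2* r + r^2) - (2 - r)^2 =
     9298/625 * (1/2-r)^4 + 32543/625 * r * (1/2-r)^3 + 211397/3750 * r^2 * (1/2-r)^2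
     + 121311/5000 * r^3 * (1/2-r) + 36331/12000 * r^4"
    by algebra
  have "1/2 - r \<ge> 0" using assms by simp
  thus ?thesis unfolding e using assms by (intro add_nonneg_nonneg mult_nonneg_nonneg) auto
qed

lemma key_s: assumes "0 \<le> (s::real)" "s < 1"
  shows "(cos (pi * s/2))^2 * (1 + s^2) \<ge> (1 - s^2)^2"
proof -
  have p: "pi \<ge> 314/100" "pi \<le> 315/100" using pi_approx by simp_all
  have pp: "pi^2 \<le> 10"
  proof -
    have "pi^2 \<le> (315/100)^2" using p by (intro power_mono) auto
    also have "(315/100)^2 = (99225/10000::real)" by (simp add: power2_eq_square)
    finally show ?thesis by simp
  qed
  show ?thesis
  proof (cases "s \<le> 1/2")
    case True
    have "cos (pi * s/2) \<ge> 1 - (pi * s/2)^2/2" by (rule cos_lb)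
    moreover have "(pi * s/2)^2/2 \<le> 5/4 * s^2"
    proof -
      have "(pi * s/2)^2/2 = pi^2 * s^2/8" by (simp add: power_mult_distrib power_divide)
      also have "\<dots> \<le> 10 * s^2 / 8" using pp by (intro divide_right_mono mult_right_mono) auto
      finally show ?thesis by simp
    qed
    ultimately have c: "cos (pi * s/2) \<ge> 1 - 5/4* s^2" by linarith
    have s2: "s^2 \<le> 1/4"
    proof -
      have "s* s \<le> (1/2)* (1/2)" using True assms by (intro mult_mono) auto
      thus ?thesis by (simp add: power2_eq_square)
    qed
    have c0: "0 \<le> 1 - 5/4* s^2" using s2 by simp
    have cc: "(cos (pi * s/2))^2 \<ge> (1 - 5/4* s^2)^2" using c c0 by (intro power_mono) auto
    have e: "(1 - 5/4 * s^2)^2 * (1 + s^2) - (1 - s^2)^2 = s^2 * ((1/2 - 31/16 * s^2) + 25/16 * s^2 * s^2)"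
      by algebra
    have "s^2 * ((1/2 - 31/16* s^2) + 25/16* s^2* s^2) \<ge> 0"
      using s2 by (intro mult_nonneg_nonneg add_nonneg_nonneg) auto
    hence "(1 - 5/4* s^2)^2 * (1 + s^2) \<ge> (1 - s^2)^2" using e by linarith
    moreover have "(cos (pi * s/2))^2 * (1 + s^2) \<ge> (1 - 5/4* s^2)^2 * (1 + s^2)"
      using cc by (intro mult_right_mono) auto
    ultimately show ?thesis by linarith
  next
    case False
    define r where "r = 1 - s"
    have r: "0 < r" "r \<le> 1/2" using False assms by (auto simp: r_def)
    define x where "x = pi* r/2"
    have cs: "cos (pi * s/2) = sin x"
    proof -
      have "pi * s/2 = pi/2 - x" by (simp add: x_def r_def field_simps)
      hence "cos (pi * s/2) = cos (pi/2 - x)" by (simp only:)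
      thus ?thesis by (simp add: cos_diff)
    qed
    have x0: "0 \<le> x" using r by (simp add: x_def)
    have x2: "x^2 \<le> 10/4 * r^2"
    proof -
      have "x^2 = pi^2 * r^2 / 4" by (simp add: x_def power_mult_distrib power_divide)
      also have "\<dots> \<le> 10 * r^2 / 4" using pp by (intro divide_right_mono mult_right_mono) auto
      finally show ?thesis by simp
    qed
    have r2: "r^2 \<le> 1/4"
    proof -
      have "r* r \<le> (1/2)* (1/2)" using r by (intro mult_mono) auto
      thus ?thesis by (simp add: power2_eq_square)
    qed
    have f0: "0 \<le> 1 - 5/12* r^2" using r2 by simp
    have xl: "x \<ge> 157/100 * r" using p r by (simp add: x_def)
    have "(157/100 * r) * (1 - 5/12 * r^2) \<le> x * (1 - x^2/6)"
      using xl x2 f0 r by (intro mult_mono) auto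
    also have "x * (1 - x^2/6) = x - x^3/6" by (simp add: algebra_simps power2_eq_square power3_eq_cube)
    also have "\<dots> \<le> sin x" by (rule sin_lb[OF x0])
    finally have sl: "sin x \<ge> (157/100 * r) * (1 - 5/12 * r^2)" .
    have sl0: "0 \<le> (157/100 * r) * (1 - 5/12* r^2)" using f0 r by simp
    have "(157/100)^2 * r^2 * (1 - 5/6* r^2) \<le> ((157/100 * r) * (1 - 5/12* r^2))^2"
    proof -
      have "((157/100 * r) * (1 - 5/12* r^2))^2 = (157/100)^2 * r^2 * ((1 - 5/6* r^2) + (5/12* r^2)^2)"
        by algebra
      moreover have "(157/100)^2 * r^2 * ((1 - 5/6* r^2) + (5/12* r^2)^2) \<ge> (157/100)^2 * r^2 * (1 - 5/6* r^2)"
        by (intro mult_left_mono) auto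
      ultimately show ?thesis by simp
    qed
    also have "\<dots> \<le> (sin x)^2" using sl sl0 by (intro power_mono) auto
    finally have sq: "(sin x)^2 \<ge> (157/100)^2 * r^2 * (1 - 5/6* r^2)" .
    have q0: "0 \<le> 2 - 2* r + r^2" using r by (simp add: power2_eq_square)
    have "(cos (pi * s/2))^2 * (1 + s^2) = (sin x)^2 * (2 - 2* r + r^2)"
      by (simp add: cs r_def algebra_simps power2_eq_square)
    also have "\<dots> \<ge> (157/100)^2 * r^2 * (1 - 5/6* r^2) * (2 - 2* r + r^2)"
      using sq q0 by (intro mult_right_mono) auto
    finally have A: "(cos (pi * s/2))^2 * (1 + s^2) \<ge> (157/100)^2 * r^2 * (1 - 5/6* r^2) * (2 - 2* r + r^2)" .
    have "r^2 * ((157/100)^2 * (1 - 5/6* r^2) * (2 - 2* r + r^2) - (2 - r)^2) \<ge> 0"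
      using polyB[of r] r by (intro mult_nonneg_nonneg) auto
    moreover have "(1 - s^2)^2 = r^2 * (2-r)^2" by (simp add: r_def algebra_simps power2_eq_square)
    ultimately show ?thesis using A by (simp add: algebra_simps)
  qed
qed

lemma key_delta: assumes "0 < (d::real)" "d < 1"
  shows "(sin (pi* d))^2 * (1/d^2 + 1/(1-d)^2) \<ge> 8"
proof -
  define s where "s = \<bar>1 - 2* d\<bar>"
  have s: "0 \<le> s" "s < 1" using assms by (auto simp: s_def)
  have sn: "sin (pi* d) = cos (pi * s/2)"
  proof -
    have "sin (pi* d) = cos (pi/2 - pi* d)" by (simp add: cos_diff)
    also have "pi/2 - pi* d = pi* (1 - 2* d)/2" by (simp add: algebra_simps)
    also have "cos (pi* (1 - 2* d)/2) = cos (pi * s/2)"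
    proof (cases "1 - 2* d \<ge> 0")
      case False
      have "pi* (1 - 2* d)/2 = -(pi * s/2)" using False by (simp add: s_def field_simps)
      thus ?thesis by (simp only: cos_minus)
    qed (simp add: s_def)
    finally show ?thesis .
  qed
  have s2: "s^2 = (1-2* d)^2" by (simp add: s_def)
  have a1: "1 - s^2 = 4 * d * (1-d)" unfolding s2 by algebra
  have a2: "1 + s^2 = 2 * (d^2 + (1-d)^2)" unfolding s2 by algebra
  have "1/d^2 + 1/(1-d)^2 = 8 * (1+s^2)/(1-s^2)^2"
  proof -
    have d0: "d \<noteq> 0" "1 - d \<noteq> 0" using assms by auto
    have "8 * (2 * (d^2 + (1-d)^2))/(4 * d * (1-d))^2 = (d^2 + (1-d)^2)/(d^2 * (1-d)^2)"
    proof -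
      have "8 * (2 * (d^2 + (1-d)^2)) = 16 * (d^2 + (1-d)^2)" by simp
      moreover have "(4 * d * (1-d))^2 = 16 * (d^2 * (1-d)^2)" by (simp add: power_mult_distrib)
      ultimately show ?thesis by (metis mult_divide_mult_cancel_left_if zero_neq_numeral)
    qed
    also have "\<dots> = 1/d^2 + 1/(1-d)^2" using d0 by (simp add: field_simps)
    finally show ?thesis unfolding a1 a2 by simp
  qed
  moreover have "(1 - s^2)^2 > 0" using s
    by (metis abs_of_nonneg abs_square_less_1 diff_gt_0_iff_gt zero_less_power)
  ultimately have pos: "(1 - s^2)^2 > 0" and H: "1/d^2 + 1/(1-d)^2 = 8 * (1+s^2)/(1-s^2)^2" by auto
  have "(sin (pi * d))^2 * (1/d^2 + 1/(1-d)^2) = (cos (pi * s/2))^2 * (8 * (1+s^2)/(1-s^2)^2)"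
    by (simp only: sn H)
  also have "\<dots> = 8 * ((cos (pi * s/2))^2 * (1 + s^2) / (1-s^2)^2)" by simp
  finally have E: "(sin (pi * d))^2 * (1/d^2 + 1/(1-d)^2) = 8 * ((cos (pi * s/2))^2 * (1 + s^2) / (1-s^2)^2)" .
  moreover have "(cos (pi * s/2))^2 * (1 + s^2) / (1-s^2)^2 \<ge> 1"
    using key_s[OF s] pos by (simp add: le_divide_eq)
  ultimately show ?thesis by linarith
qed



definition Fs :: "nat \<Rightarrow> real \<Rightarrow> complex" where "Fs M t = (\<Sum>j<M. cis (real j * t))"
definition FF :: "nat \<Rightarrow> real \<Rightarrow> real" where "FF M t = (cmod (Fs M t))^2 / (real M)^2"
definition Gw :: "nat \<Rightarrow> real \<Rightarrow> int \<Rightarrow> real" where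
  "Gw M w n = FF M (2 * pi * (real_of_int n - w) / real M)"

lemma FF_nonneg: "FF M t \<ge> 0" by (simp add: FF_def)

lemma Fs_periodic: "Fs M (t + 2 * pi * real_of_int q) = Fs M t"
proof -
  have "cis (real j * (t + 2 * pi * real_of_int q)) = cis (real j * t)" for j
  proof -
    have "cis (real j * (t + 2 * pi * real_of_int q)) = cis (real j * t) * cis (2 * pi * real_of_int (int j * q))"
      by (simp add: cis_mult algebra_simps)
    also have "cis (2 * pi * real_of_int (int j * q)) = 1" by (rule cis_multiple_2pi) simp
    finally show ?thesis by simp
  qed
  thus ?thesis by (simp add: Fs_def)
qed

lemma FF_periodic: "FF M (t + 2 * pi * real_of_int q) = FF M t"
  by (simp add: FF_def Fs_periodic)

lemma Fs_minus: "Fs M (-t) = cnj (Fs M t)"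
  by (simp add: Fs_def cis_cnj)

lemma FF_even: "FF M (-t) = FF M t"
  by (simp add: FF_def Fs_minus)

lemma FF_zero: "M \<ge> 1 \<Longrightarrow> FF M 0 = 1"
  by (simp add: FF_def Fs_def)

lemma FF_int: "M \<ge> 1 \<Longrightarrow> FF M (2 * pi * real_of_int q) = 1"
  using FF_periodic[of M 0 q] FF_zero by simp

lemma Fs_geo: "(cis t - 1) * Fs M t = cis (real M * t) - 1"
proof (induction M)
  case 0 then show ?case by (simp add: Fs_def)
next
  case (Suc M)
  have "(cis t - 1) * Fs (Suc M) t = (cis t - 1) * Fs M t + (cis t - 1) * cis (real M * t)"
    by (simp add: Fs_def algebra_simps)
  also have "\<dots> = cis (real M * t) - 1 + (cis (real M * t + t) - cis (real M * t))"
    using Suc by (simp add: cis_mult algebra_simps)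
  also have "\<dots> = cis (real (Suc M) * t) - 1" by (simp add: algebra_simps)
  finally show ?case .
qed

lemma cmod_cis_1: "(cmod (cis x - 1))^2 = 4 * (sin (x/2))^2"
proof -
  have "(cmod (cis x - 1))^2 = (cos x - 1)^2 + (sin x)^2" by (simp add: cmod_power2)
  also have "\<dots> = 2 - 2 * cos x" by (simp add: power2_eq_square algebra_simps)
  also have "cos x = cos (2 * (x/2))" by simp
  also have "\<dots> = 1 - 2 * (sin (x/2))^2" by (rule cos_double_sin)
  finally show ?thesis by simp
qed

lemma FF_closed: assumes "sin (t/2) \<noteq> 0"
  shows "FF M t = (sin (real M * t / 2))^2 / ((real M)^2 * (sin (t/2))^2)"
proof -
  have "(cmod (cis t - 1))^2 * (cmod (Fs M t))^2 = (cmod (cis (real M * t) - 1))^2"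
    by (metis Fs_geo norm_mult power_mult_distrib)
  hence "4 * (sin (t/2))^2 * (cmod (Fs M t))^2 = 4 * (sin (real M * t/2))^2"
    by (simp add: cmod_cis_1)
  hence "(cmod (Fs M t))^2 = (sin (real M * t/2))^2 / (sin (t/2))^2"
    using assms by (simp add: field_simps)
  thus ?thesis by (simp add: FF_def)
qed

lemma root_sum: assumes "0 < \<bar>d\<bar>" "\<bar>d\<bar> < int M"
  shows "(\<Sum>y<M. cis (2 * pi * real_of_int d * real y / real M)) = 0"
proof -
  define z where "z = cis (2 * pi * real_of_int d / real M)"
  have M: "M > 0" using assms by linarith
  have zy: "cis (2 * pi * real_of_int d * real y / real M) = z ^ y" for y
  proof -
    have "z ^ y = cis (real y * (2 * pi * real_of_int d / real M))" unfolding z_def by (rule Complex.DeMoivre)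
    thus ?thesis by (simp add: algebra_simps)
  qed
  have zM: "z ^ M = 1"
  proof -
    have "z ^ M = cis (real M * (2 * pi * real_of_int d / real M))" unfolding z_def by (rule Complex.DeMoivre)
    also have "\<dots> = cis (2 * pi * real_of_int d)" using M by (simp add: field_simps)
    also have "\<dots> = 1" by (rule cis_multiple_2pi) simp
    finally show ?thesis .
  qed
  have z1: "z \<noteq> 1"
  proof
    assume "z = 1"
    hence "cos (2 * pi * real_of_int d / real M) = 1" unfolding z_def
      by (metis complex.sel(1) cis.sel(1) one_complex.sel(1))
    then obtain n :: int where n: "2 * pi * real_of_int d / real M = real_of_int n * 2 * pi"
      by (auto simp: cos_one_2pi_int)
    hence "real_of_int d = real_of_int n * real M" using M by (simp add: field_simps)
    hence "d = n * int M" by (metis of_int_eq_iff of_int_mult of_int_of_nat_eq)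
    hence dn: "\<bar>d\<bar> = \<bar>n\<bar> * int M" by (simp add: abs_mult)
    have "n \<noteq> 0" using assms \<open>d = n * int M\<close> by auto
    hence "\<bar>n\<bar> \<ge> 1" by linarith
    hence "\<bar>n\<bar> * int M \<ge> int M" by (simp add: mult_le_cancel_right1)
    thus False using assms dn by linarith
  qed
  show ?thesis unfolding zy using geometric_sum[OF z1, of M] zM by simp
qed



lemma inner_sum: assumes "j < M" "l < M"
  shows "(\<Sum>y<M. cis ((real j - real l) * (2 * pi * (real y - w) / real M))) = (if j = l then of_nat M else 0)"
proof (cases "j = l")
  case True then show ?thesis by simp
next
  case False
  define d where "d = int j - int l"
  have d: "0 < \<bar>d\<bar>" "\<bar>d\<bar> < int M" using False assms by (auto simp: d_def)
  have rd: "real j - real l = real_of_int d" by (simp add: d_def)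
  have "cis ((real j - real l) * (2 * pi * (real y - w) / real M))
      = cis (- (2 * pi * real_of_int d * w / real M)) * cis (2 * pi * real_of_int d * real y / real M)" for y
  proof -
    have M: "real M > 0" using d by linarith
    show ?thesis unfolding rd cis_mult by (rule arg_cong[where f=cis]) (use M in \<open>simp add: field_simps\<close>)
  qed
  hence "(\<Sum>y<M. cis ((real j - real l) * (2 * pi * (real y - w) / real M)))
     = cis (- (2 * pi * real_of_int d * w / real M)) * (\<Sum>y<M. cis (2 * pi * real_of_int d * real y / real M))"
    by (simp add: sum_distrib_left)
  also have "\<dots> = 0" using root_sum[OF d] by simp
  finally show ?thesis using False by simp
qed

lemma Fs_sq: "complex_of_real ((cmod (Fs M t))^2) = (\<Sum>j<M. \<Sum>l<M. cis ((real j - real l) * t))"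
proof -
  have "complex_of_real ((cmod (Fs M t))^2) = Fs M t * cnj (Fs M t)" by (rule complex_norm_square)
  also have "\<dots> = (\<Sum>j<M. cis (real j * t)) * (\<Sum>l<M. cis (- (real l * t)))"
    by (simp add: Fs_def cis_cnj)
  also have "\<dots> = (\<Sum>j<M. \<Sum>l<M. cis (real j * t) * cis (- (real l * t)))" by (rule sum_product)
  also have "\<dots> = (\<Sum>j<M. \<Sum>l<M. cis ((real j - real l) * t))"
    by (simp add: cis_mult algebra_simps)
  finally show ?thesis .
qed

lemma parseval: assumes "M \<ge> 1" shows "(\<Sum>y<M. Gw M w (int y)) = 1"
proof -
  have "complex_of_real (\<Sum>y<M. Gw M w (int y))
      = (\<Sum>y<M. complex_of_real ((cmod (Fs M (2 * pi * (real y - w) / real M)))^2)) / (of_nat M)^2"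
    by (simp add: Gw_def FF_def sum_divide_distrib)
  also have "(\<Sum>y<M. complex_of_real ((cmod (Fs M (2 * pi * (real y - w) / real M)))^2))
     = (\<Sum>y<M. \<Sum>j<M. \<Sum>l<M. cis ((real j - real l) * (2 * pi * (real y - w) / real M)))"
    by (simp only: Fs_sq)
  also have "\<dots> = (\<Sum>j<M. \<Sum>l<M. \<Sum>y<M. cis ((real j - real l) * (2 * pi * (real y - w) / real M)))"
    by (subst sum.swap) (rule sum.cong[OF refl], rule sum.swap)
  also have "\<dots> = (\<Sum>j<M. \<Sum>l<M. (if j = l then of_nat M else 0))"
    by (intro sum.cong refl) (metis inner_sum lessThan_iff)
  also have "\<dots> = (of_nat M)^2" by (simp add: power2_eq_square)
  finally have "complex_of_real (\<Sum>y<M. Gw M w (int y)) = 1" using assms by simp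
  thus ?thesis by (metis of_real_eq_1_iff)
qed



lemma window_step:
  assumes per: "\<And>n. f (n + int M) = (f n :: real)"
  shows "(\<Sum>i<M. f (c + 1 + int i)) = (\<Sum>i<M. f (c + int i))"
proof -
  have "(\<Sum>i<Suc M. f (c + int i)) = f c + (\<Sum>i<M. f (c + 1 + int i))"
    by (subst sum.lessThan_Suc_shift) (simp add: algebra_simps)
  moreover have "(\<Sum>i<Suc M. f (c + int i)) = (\<Sum>i<M. f (c + int i)) + f c"
    using per[of c] by (simp add: add.commute)
  ultimately show ?thesis by simp
qed

lemma window:
  assumes per: "\<And>n. f (n + int M) = (f n :: real)"
  shows "(\<Sum>y<M. f (int y)) = (\<Sum>i<M. f (c + int i))"
proof -
  have "(\<Sum>i<M. f (c + int i)) = (\<Sum>i<M. f (0 + int i))"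
  proof (induction c rule: int_induct[where k=0])
    case base then show ?case by simp
  next
    case (step1 i) then show ?case using window_step[of f M, OF per, of i] by simp
  next
    case (step2 i) then show ?case using window_step[of f M, OF per, of "i - 1"] by simp
  qed
  thus ?thesis by simp
qed

lemma Gw_periodic: assumes "M \<ge> 1" shows "Gw M w (n + int M) = Gw M w n"
proof -
  have "2 * pi * (real_of_int (n + int M) - w) / real M = 2 * pi * (real_of_int n - w) / real M + 2 * pi * real_of_int 1"
    using assms by (simp add: field_simps)
  thus ?thesis by (simp only: Gw_def FF_periodic)
qed

lemma tele: assumes "2 \<le> k" "k - 1 \<le> K"
  shows "(\<Sum>m\<in>{k..K}. 1 / (real m)^2) \<le> 1/(real k - 1) - 1/real K"
  using assms(2)
proof (induction K rule: nat_induct_at_least)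
  case base
  have "{k..k-1} = {}" using assms by auto
  moreover have "real (k - 1) = real k - 1" using assms by simp
  ultimately show ?case by simp
next
  case (Suc K)
  have K1: "K \<ge> 1" using Suc assms by simp
  have "{k..Suc K} = insert (Suc K) {k..K}" using Suc by auto
  hence "(\<Sum>m\<in>{k..Suc K}. 1 / (real m)^2) = 1/(real (Suc K))^2 + (\<Sum>m\<in>{k..K}. 1 / (real m)^2)"
    by simp
  also have "\<dots> \<le> 1/(real (Suc K))^2 + (1/(real k - 1) - 1/real K)" using Suc by simp
  also have "1/(real (Suc K))^2 \<le> 1/real K - 1/real (Suc K)"
  proof -
    have "1/(real (Suc K))^2 \<le> 1/(real K * real (Suc K))"
      using K1 by (intro divide_left_mono) (auto simp: power2_eq_square)
    also have "\<dots> = 1/real K - 1/real (Suc K)" using K1 by (simp add: field_simps)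
    finally show ?thesis .
  qed
  finally show ?case by simp
qed

lemma R_int: assumes "finite S" "2 \<le> k" "\<forall>n\<in>S. real_of_int n - w > real k"
  shows "(\<Sum>n\<in>S. 1 / (real_of_int n - w)^2) < 1/(real k - 1)"
proof (cases "S = {}")
  case True then show ?thesis using assms by simp
next
  case False
  define f where "f n = nat (n - \<lfloor>w\<rfloor> - 1)" for n
  have fk: "f n \<ge> k" and fl: "real (f n) \<le> real_of_int n - w" and fp: "real (f n) > 0"
    and fr: "real (f n) = real_of_int (n - \<lfloor>w\<rfloor> - 1)" if "n \<in> S" for n
  proof -
    have a: "real_of_int n > w + real k" using assms that by auto
    have "real_of_int (\<lfloor>w\<rfloor> + int k) \<le> w + real k" by simp
    hence "real_of_int (\<lfloor>w\<rfloor> + int k) < real_of_int n" using a by linarith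
    hence "\<lfloor>w\<rfloor> + int k < n" by (simp only: of_int_less_iff)
    hence z: "int k \<le> n - \<lfloor>w\<rfloor> - 1" by linarith
    hence z0: "0 \<le> n - \<lfloor>w\<rfloor> - 1" by linarith
    show "f n \<ge> k" unfolding f_def using z z0 by (simp add: le_nat_iff)
    show fr: "real (f n) = real_of_int (n - \<lfloor>w\<rfloor> - 1)" unfolding f_def using z0 by (simp only: of_nat_nat)
    show "real (f n) \<le> real_of_int n - w" unfolding fr using real_of_int_floor_add_one_gt[of w] by (simp del: real_of_int_floor_add_one_gt)
    show "real (f n) > 0" using \<open>f n \<ge> k\<close> assms by simp
  qed
  have inj: "inj_on f S"
  proof (rule inj_onI)
    fix x y assume xy: "x \<in> S" "y \<in> S" "f x = f y"
    have "real (f x) = real (f y)" using xy(3) by (rule arg_cong)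
    hence "real_of_int (x - \<lfloor>w\<rfloor> - 1) = real_of_int (y - \<lfloor>w\<rfloor> - 1)"
      using fr[OF xy(1)] fr[OF xy(2)] by linarith
    hence "x - \<lfloor>w\<rfloor> - 1 = y - \<lfloor>w\<rfloor> - 1" by (simp only: of_int_eq_iff)
    thus "x = y" by linarith
  qed
  have "(\<Sum>n\<in>S. 1 / (real_of_int n - w)^2) \<le> (\<Sum>n\<in>S. 1 / (real (f n))^2)"
  proof (rule sum_mono)
    fix n assume n: "n \<in> S"
    show "1 / (real_of_int n - w)^2 \<le> 1 / (real (f n))^2"
    proof (rule frac_le)
      show "(real (f n))^2 \<le> (real_of_int n - w)^2" using fl[OF n] fp[OF n] by (intro power_mono) auto
      show "0 < (real (f n))^2" using fp[OF n] by simp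
    qed simp_all
  qed
  also have "\<dots> = (\<Sum>m\<in>f ` S. 1 / (real m)^2)" using inj by (simp add: sum.reindex)
  also have "\<dots> \<le> (\<Sum>m\<in>{k..Max (f ` S)}. 1 / (real m)^2)"
  proof (rule sum_mono2)
    show "f ` S \<subseteq> {k..Max (f ` S)}" using fk assms(1) by auto
  qed auto
  also have "\<dots> \<le> 1/(real k - 1) - 1/real (Max (f ` S))"
  proof (rule tele[OF assms(2)])
    obtain n where "n \<in> S" using False by auto
    hence "f n \<le> Max (f ` S)" using assms(1) by auto
    thus "k - 1 \<le> Max (f ` S)" using fk[OF \<open>n \<in> S\<close>] by linarith
  qed
  also have "\<dots> < 1/(real k - 1)"
  proof -
    obtain n where "n \<in> S" using False by auto
    hence "f n \<le> Max (f ` S)" using assms(1) by auto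
    hence "Max (f ` S) > 0" using fk[OF \<open>n \<in> S\<close>] assms by linarith
    thus ?thesis by simp
  qed
  finally show ?thesis .
qed

lemma R_idx: assumes "finite I" "2 \<le> k" "inj_on g I" "\<forall>i\<in>I. real_of_int (g i) - w > real k"
  shows "(\<Sum>i\<in>I. 1 / (real_of_int (g i) - w)^2) < 1/(real k - 1)"
proof -
  have "(\<Sum>i\<in>I. 1 / (real_of_int (g i) - w)^2) = (\<Sum>n\<in>g ` I. 1 / (real_of_int n - w)^2)"
    using assms(3) by (simp add: sum.reindex)
  also have "\<dots> < 1/(real k - 1)" using assms by (intro R_int) auto
  finally show ?thesis .
qed



lemma abs_sin_ge: assumes "\<bar>x\<bar> \<le> pi/2" shows "\<bar>sin x\<bar> \<ge> 2 * \<bar>x\<bar> / pi"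
proof (cases "x \<ge> 0")
  case True
  have "sin x \<ge> 2 * x / pi" using jordan[of x] True assms by auto
  thus ?thesis using True by auto
next
  case False
  have "sin (-x) \<ge> 2 * (-x) / pi" using jordan[of "-x"] False assms by auto
  thus ?thesis using False by auto
qed

lemma Gw_up: assumes M: "M \<ge> 1" and D: "0 < \<bar>real_of_int n - w\<bar>" "\<bar>real_of_int n - w\<bar> \<le> real M / 2"
  shows "Gw M w n \<le> 1 / (4 * (real_of_int n - w)^2)"
proof -
  define D where "D = real_of_int n - w"
  define x where "x = pi * D / real M"
  have Mp: "real M > 0" using M by simp
  have t2: "2 * pi * D / real M / 2 = x" by (simp add: x_def)
  have Mt: "real M * (2 * pi * D / real M) / 2 = pi * D" using Mp by (simp add: field_simps)
  have ax: "\<bar>x\<bar> = pi * \<bar>D\<bar> / real M" using Mp by (simp add: x_def abs_mult)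
  have xle: "\<bar>x\<bar> \<le> pi/2"
  proof -
    have "pi * \<bar>D\<bar> \<le> pi * (real M / 2)" using D by (simp add: D_def)
    thus ?thesis unfolding ax using Mp by (simp add: field_simps)
  qed
  have sx: "\<bar>sin x\<bar> \<ge> 2 * \<bar>D\<bar> / real M"
  proof -
    have "2 * \<bar>x\<bar> / pi = 2 * \<bar>D\<bar> / real M" unfolding ax by simp
    thus ?thesis using abs_sin_ge[OF xle] by simp
  qed
  have Dp: "2 * \<bar>D\<bar> / real M > 0" using D Mp by (simp add: D_def)
  hence sn: "sin x \<noteq> 0" using sx by auto
  have "Gw M w n = (sin (pi * D))^2 / ((real M)^2 * (sin x)^2)"
    unfolding Gw_def D_def[symmetric] using FF_closed[of "2 * pi * D / real M" M] sn by (simp only: t2 Mt) simp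
  also have "\<dots> \<le> 1 / ((real M)^2 * (sin x)^2)"
    using sn by (intro divide_right_mono) (auto simp: abs_square_le_1)
  also have "\<dots> \<le> 1 / ((real M)^2 * (2 * \<bar>D\<bar> / real M)^2)"
  proof (rule divide_left_mono)
    have "(2 * \<bar>D\<bar> / real M)^2 \<le> (sin x)^2"
      using sx Dp by (metis abs_le_square_iff abs_of_pos)
    thus "(real M)^2 * (2 * \<bar>D\<bar> / real M)^2 \<le> (real M)^2 * (sin x)^2" by (intro mult_left_mono) auto
    show "0 < (real M)^2 * (sin x)^2 * ((real M)^2 * (2 * \<bar>D\<bar> / real M)^2)"
      using sn Dp Mp by (intro mult_pos_pos) auto
  qed simp
  also have "(real M)^2 * (2 * \<bar>D\<bar> / real M)^2 = 4 * D^2"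
    using Mp by (simp add: field_simps power2_eq_square)
  finally show ?thesis by (simp add: D_def)
qed

lemma FF_low: assumes M: "M \<ge> 1" and e: "0 < e" "e < 1"
  shows "FF M (2 * pi * e / real M) \<ge> (sin (pi * e))^2 / (pi^2 * e^2)"
proof -
  define x where "x = pi * e / real M"
  have Mp: "real M > 0" using M by simp
  have t2: "2 * pi * e / real M / 2 = x" by (simp add: x_def)
  have Mt: "real M * (2 * pi * e / real M) / 2 = pi * e" using Mp by (simp add: field_simps)
  have x0: "0 < x" using e Mp by (simp add: x_def)
  have xpi: "x < pi"
  proof -
    have "e / real M < 1" using e M by (simp add: divide_less_eq)
    hence "pi * (e / real M) < pi * 1" by (intro mult_strict_left_mono) auto
    thus ?thesis by (simp add: x_def)
  qed
  have sp: "sin x > 0" using x0 xpi by (rule sin_gt_zero)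
  have sl: "sin x \<le> x" using sin_x_le_x x0 by simp
  have "(sin (pi * e))^2 / (pi^2 * e^2) = (sin (pi * e))^2 / ((real M)^2 * x^2)"
    using Mp by (simp add: x_def power_mult_distrib power_divide)
  also have "\<dots> \<le> (sin (pi * e))^2 / ((real M)^2 * (sin x)^2)"
  proof (rule divide_left_mono)
    show "(real M)^2 * (sin x)^2 \<le> (real M)^2 * x^2"
      using sl sp by (intro mult_left_mono power_mono) auto
    show "0 < (real M)^2 * x^2 * ((real M)^2 * (sin x)^2)" using Mp x0 sp by simp
  qed simp
  also have "\<dots> = FF M (2 * pi * e / real M)"
    using FF_closed[of "2 * pi * e / real M" M] sp by (simp only: t2 Mt)
  finally show ?thesis .
qed

lemma two_points: assumes M: "M \<ge> 1"
  shows "Gw M w \<lfloor>w\<rfloor> + Gw M w (\<lfloor>w\<rfloor> + 1) \<ge> 8 / pi^2"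
proof -
  define d where "d = w - real_of_int \<lfloor>w\<rfloor>"
  have d: "0 \<le> d" "d < 1" using real_of_int_floor_add_one_gt[of w] by (auto simp: d_def simp del: real_of_int_floor_add_one_gt)
  have pi9: "pi^2 \<ge> 8"
  proof -
    have "(3::real)^2 \<le> pi^2" using pi_gt3 by (intro power_mono) auto
    thus ?thesis by simp
  qed
  have g0: "Gw M w \<lfloor>w\<rfloor> = FF M (2 * pi * d / real M)"
    unfolding Gw_def d_def by (metis FF_even minus_diff_eq mult_minus_right minus_divide_left)
  have g1: "Gw M w (\<lfloor>w\<rfloor> + 1) = FF M (2 * pi * (1 - d) / real M)"
    unfolding Gw_def d_def by (simp add: algebra_simps)
  show ?thesis
  proof (cases "d = 0")
    case True
    have "Gw M w \<lfloor>w\<rfloor> = 1" unfolding g0 True using FF_zero[OF M] by simp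
    moreover have "Gw M w (\<lfloor>w\<rfloor> + 1) \<ge> 0" by (simp add: Gw_def FF_nonneg)
    moreover have "8 / pi^2 \<le> 1" using pi9 by simp
    ultimately show ?thesis by linarith
  next
    case False
    hence d0: "0 < d" using d by simp
    have a: "Gw M w \<lfloor>w\<rfloor> \<ge> (sin (pi * d))^2 / (pi^2 * d^2)"
      unfolding g0 using FF_low[OF M d0 d(2)] .
    have b: "Gw M w (\<lfloor>w\<rfloor> + 1) \<ge> (sin (pi * d))^2 / (pi^2 * (1-d)^2)"
    proof -
      have "sin (pi * (1 - d)) = sin (pi * d)" by (simp add: algebra_simps sin_diff)
      thus ?thesis unfolding g1 using FF_low[OF M, of "1 - d"] d0 d by simp
    qed
    have "(sin (pi * d))^2 / (pi^2 * d^2) + (sin (pi * d))^2 / (pi^2 * (1-d)^2)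
        = (sin (pi * d))^2 * (1/d^2 + 1/(1-d)^2) / pi^2"
      by (simp add: field_simps)
    also have "\<dots> \<ge> 8 / pi^2" using key_delta[OF d0 d(2)] by (intro divide_right_mono) auto
    finally show ?thesis using a b by linarith
  qed
qed



lemma win_bounds: assumes "M \<ge> 1"
  shows "\<bar>real_of_int (\<lfloor>w - real M / 2\<rfloor> + 1 + int i) - w\<bar> \<le> real M / 2 \<or> i \<ge> M"
proof (cases "i < M")
  case True
  define c where "c = \<lfloor>w - real M / 2\<rfloor>"
  have c1: "real_of_int c \<le> w - real M / 2" by (simp add: c_def)
  have c2: "w - real M / 2 < real_of_int c + 1" using real_of_int_floor_add_one_gt[of "w - real M / 2"]
    by (simp add: c_def del: real_of_int_floor_add_one_gt)
  have "real i + 1 \<le> real M" using True by simp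
  hence "real_of_int c + 1 + real i - w \<le> real M / 2" "-(real_of_int c + 1 + real i - w) \<le> real M / 2"
    using c1 c2 by linarith+
  hence "\<bar>real_of_int c + 1 + real i - w\<bar> \<le> real M / 2" by (simp only: abs_le_iff)
  thus ?thesis by (simp add: c_def)
qed simp

lemma core_far: assumes M: "M \<ge> 1" and k: "2 \<le> k"
  shows "(\<Sum>i<M. if \<bar>real_of_int (\<lfloor>w - real M / 2\<rfloor> + 1 + int i) - w\<bar> > real k
            then Gw M w (\<lfloor>w - real M / 2\<rfloor> + 1 + int i) else 0) < 1 / (2 * (real k - 1))"
proof -
  define c where "c = \<lfloor>w - real M / 2\<rfloor> + 1"
  define D where "D i = real_of_int (c + int i) - w" for i
  have le: "(if \<bar>D i\<bar> > real k then Gw M w (c + int i) else 0)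
      \<le> (if D i > real k then 1 / (4 * (D i)^2) else 0) + (if - D i > real k then 1 / (4 * (D i)^2) else 0)"
    if i: "i \<in> {..<M}" for i
  proof (cases "\<bar>D i\<bar> > real k")
    case True
    have b: "\<bar>D i\<bar> \<le> real M / 2" using win_bounds[OF M, of w i] i by (simp add: D_def c_def)
    have "Gw M w (c + int i) \<le> 1 / (4 * (D i)^2)"
      using Gw_up[OF M, of "c + int i" w] b True k by (simp add: D_def)
    thus ?thesis using True by (cases "D i < 0") auto
  qed auto
  have "(\<Sum>i<M. if \<bar>D i\<bar> > real k then Gw M w (c + int i) else 0)
      \<le> (\<Sum>i<M. (if D i > real k then 1 / (4 * (D i)^2) else 0) + (if - D i > real k then 1 / (4 * (D i)^2) else 0))"
    by (rule sum_mono) (rule le)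
  also have "\<dots> = (\<Sum>i\<in>{i\<in>{..<M}. D i > real k}. 1 / (4 * (D i)^2)) + (\<Sum>i\<in>{i\<in>{..<M}. - D i > real k}. 1 / (4 * (D i)^2))"
    unfolding sum.distrib by (subst (1 2) sum.inter_filter) auto
  also have "\<dots> = (1/4) * (\<Sum>i\<in>{i\<in>{..<M}. D i > real k}. 1 / (real_of_int (c + int i) - w)^2)
       + (1/4) * (\<Sum>i\<in>{i\<in>{..<M}. - D i > real k}. 1 / (real_of_int (- (c + int i)) - (- w))^2)"
    by (simp add: sum_distrib_left D_def power2_eq_square algebra_simps)
  also have "\<dots> < (1/4) * (1 / (real k - 1)) + (1/4) * (1 / (real k - 1))"
  proof (rule add_strict_mono; rule mult_strict_left_mono)
    show "(\<Sum>i\<in>{i\<in>{..<M}. D i > real k}. 1 / (real_of_int (c + int i) - w)^2) < 1 / (real k - 1)"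
      by (rule R_idx) (auto simp: D_def inj_on_def k)
    show "(\<Sum>i\<in>{i\<in>{..<M}. - D i > real k}. 1 / (real_of_int (- (c + int i)) - (- w))^2) < 1 / (real k - 1)"
      by (rule R_idx) (auto simp: D_def inj_on_def k)
  qed auto
  also have "\<dots> = 1 / (2 * (real k - 1))" using k by (simp add: field_simps)
  finally show ?thesis unfolding c_def[symmetric] D_def[symmetric] .
qed



lemma core2: assumes M: "M \<ge> 1" and k: "2 \<le> k"
  and per: "\<And>n. Pr (n + int M) = Pr n"
  and near: "\<And>n. \<bar>real_of_int n - w\<bar> \<le> real k \<Longrightarrow> Pr n"
  shows "(\<Sum>y<M. if Pr (int y) then Gw M w (int y) else 0) > 1 - 1 / (2 * (real k - 1))"
proof -
  define H where "H n = (if Pr n then Gw M w n else 0)" for n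
  have Hper: "H (n + int M) = H n" for n by (simp add: H_def per Gw_periodic[OF M])
  have "(\<Sum>y<M. if Pr (int y) then Gw M w (int y) else 0) = (\<Sum>y<M. H (int y))" by (simp add: H_def)
  also have "\<dots> = (\<Sum>i<M. H (\<lfloor>w - real M / 2\<rfloor> + 1 + int i))" by (rule window) (rule Hper)
  also have "\<dots> \<ge> (\<Sum>i<M. Gw M w (\<lfloor>w - real M / 2\<rfloor> + 1 + int i)
      - (if \<bar>real_of_int (\<lfloor>w - real M / 2\<rfloor> + 1 + int i) - w\<bar> > real k
            then Gw M w (\<lfloor>w - real M / 2\<rfloor> + 1 + int i) else 0))"
  proof (rule sum_mono)
    fix i assume "i \<in> {..<M}"
    show "Gw M w (\<lfloor>w - real M / 2\<rfloor> + 1 + int i)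
      - (if \<bar>real_of_int (\<lfloor>w - real M / 2\<rfloor> + 1 + int i) - w\<bar> > real k
            then Gw M w (\<lfloor>w - real M / 2\<rfloor> + 1 + int i) else 0) \<le> H (\<lfloor>w - real M / 2\<rfloor> + 1 + int i)"
      using near[of "\<lfloor>w - real M / 2\<rfloor> + 1 + int i"] by (auto simp: H_def Gw_def FF_nonneg)
  qed
  also have "(\<Sum>i<M. Gw M w (\<lfloor>w - real M / 2\<rfloor> + 1 + int i)
      - (if \<bar>real_of_int (\<lfloor>w - real M / 2\<rfloor> + 1 + int i) - w\<bar> > real k
            then Gw M w (\<lfloor>w - real M / 2\<rfloor> + 1 + int i) else 0))
     = (\<Sum>i<M. Gw M w (\<lfloor>w - real M / 2\<rfloor> + 1 + int i))
      - (\<Sum>i<M. (if \<bar>real_of_int (\<lfloor>w - real M / 2\<rfloor> + 1 + int i) - w\<bar> > real k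
            then Gw M w (\<lfloor>w - real M / 2\<rfloor> + 1 + int i) else 0))"
    by (rule sum_subtractf)
  also have "(\<Sum>i<M. Gw M w (\<lfloor>w - real M / 2\<rfloor> + 1 + int i)) = (\<Sum>y<M. Gw M w (int y))"
    by (rule window[symmetric]) (rule Gw_periodic[OF M])
  also have "\<dots> = 1" by (rule parseval[OF M])
  finally have A: "(\<Sum>y<M. if Pr (int y) then Gw M w (int y) else 0) \<ge> 1 -
      (\<Sum>i<M. (if \<bar>real_of_int (\<lfloor>w - real M / 2\<rfloor> + 1 + int i) - w\<bar> > real k
            then Gw M w (\<lfloor>w - real M / 2\<rfloor> + 1 + int i) else 0))" .
  show ?thesis using A core_far[OF M k, of w] by linarith
qed

lemma core1: assumes M: "M \<ge> 1"
  and per: "\<And>n. Pr (n + int M) = Pr n"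
  and near: "\<And>n. \<bar>real_of_int n - w\<bar> \<le> 1 \<Longrightarrow> Pr n"
  shows "(\<Sum>y<M. if Pr (int y) then Gw M w (int y) else 0) \<ge> 8 / pi^2"
proof -
  define H where "H n = (if Pr n then Gw M w n else 0)" for n
  have Hper: "H (n + int M) = H n" for n by (simp add: H_def per Gw_periodic[OF M])
  have H0: "H n \<ge> 0" for n by (simp add: H_def Gw_def FF_nonneg)
  have pi9: "pi^2 \<ge> 8"
  proof -
    have "(3::real)^2 \<le> pi^2" using pi_gt3 by (intro power_mono) auto
    thus ?thesis by simp
  qed
  have "(\<Sum>y<M. if Pr (int y) then Gw M w (int y) else 0) = (\<Sum>y<M. H (int y))" by (simp add: H_def)
  also have "\<dots> = (\<Sum>i<M. H (\<lfloor>w\<rfloor> + int i))" by (rule window) (rule Hper)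
  finally have S: "(\<Sum>y<M. if Pr (int y) then Gw M w (int y) else 0) = (\<Sum>i<M. H (\<lfloor>w\<rfloor> + int i))" .
  show ?thesis
  proof (cases "M = 1")
    case True
    have "(\<Sum>i<M. H (\<lfloor>w - 1/2\<rfloor> + 1 + int i)) = (\<Sum>y<M. H (int y))" by (rule window[symmetric]) (rule Hper)
    moreover have "(\<Sum>i<M. Gw M w (\<lfloor>w - 1/2\<rfloor> + 1 + int i)) = (\<Sum>y<M. Gw M w (int y))"
      by (rule window[symmetric]) (rule Gw_periodic[OF M])
    moreover have "Pr (\<lfloor>w - 1/2\<rfloor> + 1)"
    proof (rule near)
      have "real_of_int \<lfloor>w - 1/2\<rfloor> \<le> w - 1/2" by simp
      moreover have "w - 1/2 < real_of_int \<lfloor>w - 1/2\<rfloor> + 1" by simp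
      ultimately show "\<bar>real_of_int (\<lfloor>w - 1/2\<rfloor> + 1) - w\<bar> \<le> 1" by (simp add: abs_le_iff) linarith
    qed
    ultimately have "(\<Sum>y<M. H (int y)) = (\<Sum>y<M. Gw M w (int y))" using True by (simp add: H_def)
    hence "(\<Sum>y<M. if Pr (int y) then Gw M w (int y) else 0) = 1" using parseval[OF M] by (simp add: H_def)
    thus ?thesis using pi9 by simp
  next
    case False
    hence M2: "M \<ge> 2" using M by simp
    have "(\<Sum>i<M. H (\<lfloor>w\<rfloor> + int i)) \<ge> (\<Sum>i\<in>{0,1}. H (\<lfloor>w\<rfloor> + int i))"
      by (rule sum_mono2) (use M2 H0 in auto)
    also have "(\<Sum>i\<in>{0,1}. H (\<lfloor>w\<rfloor> + int i)) = H \<lfloor>w\<rfloor> + H (\<lfloor>w\<rfloor> + 1)" by simp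
    also have "H \<lfloor>w\<rfloor> = Gw M w \<lfloor>w\<rfloor>"
    proof -
      have "Pr \<lfloor>w\<rfloor>" by (rule near) (simp add: abs_le_iff, linarith)
      thus ?thesis by (simp add: H_def)
    qed
    also have "H (\<lfloor>w\<rfloor> + 1) = Gw M w (\<lfloor>w\<rfloor> + 1)"
    proof -
      have "Pr (\<lfloor>w\<rfloor> + 1)"
      proof (rule near)
        have "real_of_int \<lfloor>w\<rfloor> \<le> w" "w < real_of_int \<lfloor>w\<rfloor> + 1" by simp_all
        thus "\<bar>real_of_int (\<lfloor>w\<rfloor> + 1) - w\<bar> \<le> 1" by (simp only: of_int_add of_int_1 abs_le_iff) linarith
      qed
      thus ?thesis by (simp add: H_def)
    qed
    finally show ?thesis unfolding S using two_points[OF M, of w] by linarith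
  qed
qed

lemma core_exact: assumes M: "M \<ge> 1"
  and per: "\<And>n. Pr (n + int M) = Pr n"
  and m: "Pr m"
  shows "(\<Sum>y<M. if Pr (int y) then Gw M (real_of_int m) (int y) else 0) = 1"
proof -
  define H where "H n = (if Pr n then Gw M (real_of_int m) n else 0)" for n
  have Hper: "H (n + int M) = H n" for n by (simp add: H_def per Gw_periodic[OF M])
  have H0: "H n \<ge> 0" for n by (simp add: H_def Gw_def FF_nonneg)
  have "(\<Sum>y<M. if Pr (int y) then Gw M (real_of_int m) (int y) else 0) = (\<Sum>y<M. H (int y))" by (simp add: H_def)
  also have "\<dots> = (\<Sum>i<M. H (m + int i))" by (rule window) (rule Hper)
  finally have S: "(\<Sum>y<M. if Pr (int y) then Gw M (real_of_int m) (int y) else 0) = (\<Sum>i<M. H (m + int i))" .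
  have T: "(\<Sum>i<M. Gw M (real_of_int m) (m + int i)) = 1"
    using window[of "Gw M (real_of_int m)" M m] Gw_periodic[OF M] parseval[OF M] by simp
  have "H m = 1" using m FF_zero[OF M] by (simp add: H_def Gw_def)
  hence lo: "(\<Sum>i<M. H (m + int i)) \<ge> 1"
    using member_le_sum[of 0 "{..<M}" "\<lambda>i. H (m + int i)"] M H0 by simp
  have "(\<Sum>i<M. H (m + int i)) \<le> (\<Sum>i<M. Gw M (real_of_int m) (m + int i))"
    by (rule sum_mono) (simp add: H_def Gw_def FF_nonneg)
  thus ?thesis using S T lo by linarith
qed



lemma Psi_eq: assumes "finite B" "0 \<in> B" shows "Psi B A x = A x 0"
  unfolding Psi_def mat_app_def ket_def using assms
  by (simp add: if_distrib[of "\<lambda>t. A x _ * t"] sum.delta' cong: if_cong)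

lemma unit_col: assumes "unitary_on B A" "x \<in> B" "y \<in> B"
  shows "(\<Sum>z\<in>B. cnj (A z x) * A z y) = (if x = y then 1 else 0)"
  using assms unfolding unitary_on_def by blast

lemma unit_row: assumes "unitary_on B A" "x \<in> B" "y \<in> B"
  shows "(\<Sum>z\<in>B. A x z * cnj (A y z)) = (if x = y then 1 else 0)"
  using assms unfolding unitary_on_def by blast

lemma AAdag: assumes "finite B" "unitary_on B A" "x \<in> B"
  shows "(\<Sum>y\<in>B. A x y * (\<Sum>z\<in>B. cnj (A z y) * u z)) = u x"
proof -
  have "(\<Sum>y\<in>B. A x y * (\<Sum>z\<in>B. cnj (A z y) * u z)) = (\<Sum>y\<in>B. \<Sum>z\<in>B. A x y * cnj (A z y) * u z)"
    by (simp add: sum_distrib_left mult.assoc)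
  also have "\<dots> = (\<Sum>z\<in>B. \<Sum>y\<in>B. A x y * cnj (A z y) * u z)" by (rule sum.swap)
  also have "\<dots> = (\<Sum>z\<in>B. (\<Sum>y\<in>B. A x y * cnj (A z y)) * u z)" by (simp add: sum_distrib_right)
  also have "\<dots> = (\<Sum>z\<in>B. (if x = z then 1 else 0) * u z)"
    by (rule sum.cong[OF refl]) (simp add: unit_row[OF assms(2,3)])
  also have "\<dots> = u x" using assms by (simp add: if_distrib[of "\<lambda>t. t * u _"] cong: if_cong)
  finally show ?thesis .
qed

lemma Q_formula: assumes "finite B" "0 \<in> B" "unitary_on B A" "x \<in> B"
  shows "Q_op B A \<chi> v x = 2 * Psi B A x * (\<Sum>z\<in>B. cnj (Psi B A z) * S_chi \<chi> v z) - S_chi \<chi> v x"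
proof -
  define u where "u = S_chi \<chi> v"
  define w where "w y = (\<Sum>z\<in>B. cnj (A z y) * u z)" for y
  have mw: "mat_app B (Defs.adjoint A) (S_chi \<chi> v) = w" by (simp add: mat_app_def Defs.adjoint_def w_def u_def fun_eq_iff)
  have sz: "S_zero w y = w y - (if y = 0 then 2 * w y else 0)" for y by (simp add: S_zero_def)
  have "mat_app B A (S_zero w) x = (\<Sum>y\<in>B. A x y * w y) - (\<Sum>y\<in>B. A x y * (if y = 0 then 2 * w y else 0))"
    by (simp add: mat_app_def sz right_diff_distrib sum_subtractf)
  also have "(\<Sum>y\<in>B. A x y * (if y = 0 then 2 * w y else 0)) = 2 * A x 0 * w 0"
    using assms(1,2) by (simp add: if_distrib[of "\<lambda>t. A x _ * t"] sum.delta' cong: if_cong)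
  also have "(\<Sum>y\<in>B. A x y * w y) = u x" unfolding w_def by (rule AAdag[OF assms(1,3,4)])
  finally have "mat_app B A (S_zero w) x = u x - 2 * A x 0 * w 0" .
  moreover have "w 0 = (\<Sum>z\<in>B. cnj (Psi B A z) * u z)" by (simp add: w_def Psi_eq[OF assms(1,2)])
  ultimately show ?thesis
    unfolding Q_op_def mw by (simp add: u_def Psi_eq[OF assms(1,2)])
qed



definition psi1 :: "(int \<Rightarrow> nat) \<Rightarrow> nat set \<Rightarrow> (nat \<Rightarrow> nat \<Rightarrow> complex) \<Rightarrow> nat \<Rightarrow> complex" where
  "psi1 \<chi> B A x = (if \<chi> (int x) = 1 then Psi B A x else 0)"
definition psi0 :: "(int \<Rightarrow> nat) \<Rightarrow> nat set \<Rightarrow> (nat \<Rightarrow> nat \<Rightarrow> complex) \<Rightarrow> nat \<Rightarrow> complex" where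
  "psi0 \<chi> B A x = (if \<chi> (int x) = 1 then 0 else Psi B A x)"

fun sc :: "real \<Rightarrow> nat \<Rightarrow> real \<times> real" where
  "sc a 0 = (1, 1)"
| "sc a (Suc j) = ((1 - 2*a) * fst (sc a j) + 2*(1 - a) * snd (sc a j),
                   - 2*a * fst (sc a j) + (1 - 2*a) * snd (sc a j))"

lemma zcnj: "z * cnj z = (complex_of_real (cmod z))^2"
  using complex_norm_square[of z] by simp

lemma cnjz: "cnj z * z = (complex_of_real (cmod z))^2"
  using complex_norm_square[of z] by (simp add: mult.commute)

lemma normC: assumes "finite B" "0 \<in> B" "unitary_on B A"
  shows "(\<Sum>z\<in>B. cnj (Psi B A z) * Psi B A z) = 1"
  using unit_col[OF assms(3,2,2)] by (simp add: Psi_eq[OF assms(1,2)])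

lemma normR: assumes "finite B" "0 \<in> B" "unitary_on B A"
  shows "(\<Sum>z\<in>B. (cmod (Psi B A z))^2) = 1"
proof -
  have "complex_of_real (\<Sum>z\<in>B. (cmod (Psi B A z))^2) = (\<Sum>z\<in>B. cnj (Psi B A z) * Psi B A z)"
    by (simp add: zcnj cnjz)
  also have "\<dots> = 1" by (rule normC[OF assms])
  finally show ?thesis by (metis of_real_eq_1_iff)
qed

lemma amp_eq: "amp B A \<chi> = (\<Sum>z\<in>B. if \<chi> (int z) = 1 then (cmod (Psi B A z))^2 else 0)"
proof -
  have "inner_on B (good_part \<chi> (Psi B A)) (good_part \<chi> (Psi B A))
     = complex_of_real (\<Sum>z\<in>B. if \<chi> (int z) = 1 then (cmod (Psi B A z))^2 else 0)"
    unfolding inner_on_def good_part_def of_real_sum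
    by (rule sum.cong[OF refl]) (simp add: zcnj cnjz)
  thus ?thesis unfolding amp_def by simp
qed

lemma amp_bad: assumes "finite B" "0 \<in> B" "unitary_on B A"
  shows "(\<Sum>z\<in>B. if \<chi> (int z) = 1 then 0 else (cmod (Psi B A z))^2) = 1 - amp B A \<chi>"
proof -
  have "(\<Sum>z\<in>B. if \<chi> (int z) = 1 then 0 else (cmod (Psi B A z))^2)
      = (\<Sum>z\<in>B. (cmod (Psi B A z))^2 - (if \<chi> (int z) = 1 then (cmod (Psi B A z))^2 else 0))"
    by (rule sum.cong) auto
  also have "\<dots> = 1 - amp B A \<chi>" by (simp add: sum_subtractf normR[OF assms] amp_eq)
  finally show ?thesis .
qed

lemma amp_range: assumes "finite B" "0 \<in> B" "unitary_on B A"
  shows "0 \<le> amp B A \<chi>" "amp B A \<chi> \<le> 1"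
proof -
  show "0 \<le> amp B A \<chi>" unfolding amp_eq by (rule sum_nonneg) auto
  have "0 \<le> (\<Sum>z\<in>B. if \<chi> (int z) = 1 then 0 else (cmod (Psi B A z))^2)" by (rule sum_nonneg) auto
  thus "amp B A \<chi> \<le> 1" using amp_bad[OF assms, of \<chi>] by simp
qed

lemma ampC1: "(\<Sum>z\<in>B. cnj (Psi B A z) * psi1 \<chi> B A z) = complex_of_real (amp B A \<chi>)"
  unfolding amp_eq of_real_sum
  by (rule sum.cong[OF refl]) (simp add: psi1_def zcnj cnjz)

lemma ampC0: assumes "finite B" "0 \<in> B" "unitary_on B A"
  shows "(\<Sum>z\<in>B. cnj (Psi B A z) * psi0 \<chi> B A z) = complex_of_real (1 - amp B A \<chi>)"
  unfolding amp_bad[OF assms, symmetric] of_real_sum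
  by (rule sum.cong[OF refl]) (simp add: psi0_def zcnj cnjz)

lemma S_chi_B: assumes "\<forall>x. \<chi> x \<in> {0, 1}"
  shows "S_chi \<chi> v z = (if \<chi> (int z) = 1 then - v z else v z)"
proof -
  have "\<chi> (int z) = 0 \<or> \<chi> (int z) = 1" using assms by auto
  thus ?thesis by (auto simp: S_chi_def)
qed

lemma Qpow: assumes B: "finite B" "0 \<in> B" and chi: "\<forall>x. \<chi> x \<in> {0, 1}" and U: "unitary_on B A"
  shows "\<forall>x\<in>B. (Q_op B A \<chi> ^^ j) (\<lambda>x. \<kappa> * Psi B A x) x
     = \<kappa> * (complex_of_real (fst (sc (amp B A \<chi>) j)) * psi1 \<chi> B A x
            + complex_of_real (snd (sc (amp B A \<chi>) j)) * psi0 \<chi> B A x)"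
proof (induction j)
  case 0
  show ?case by (auto simp: psi1_def psi0_def)
next
  case (Suc j)
  define a where "a = amp B A \<chi>"
  define s where "s = fst (sc a j)"
  define c where "c = snd (sc a j)"
  define V where "V = (Q_op B A \<chi> ^^ j) (\<lambda>x. \<kappa> * Psi B A x)"
  have V: "V z = \<kappa> * (complex_of_real s * psi1 \<chi> B A z + complex_of_real c * psi0 \<chi> B A z)" if "z \<in> B" for z
    using Suc that by (simp add: V_def s_def c_def a_def)
  have SV: "S_chi \<chi> V z = \<kappa> * (- complex_of_real s * psi1 \<chi> B A z + complex_of_real c * psi0 \<chi> B A z)"
    if "z \<in> B" for z
    using V[OF that] by (simp add: S_chi_B[OF chi] psi1_def psi0_def)
  have inner: "(\<Sum>z\<in>B. cnj (Psi B A z) * S_chi \<chi> V z) = \<kappa> * (- complex_of_real s * complex_of_real a + complex_of_real c * complex_of_real (1 - a))"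
  proof -
    have "(\<Sum>z\<in>B. cnj (Psi B A z) * S_chi \<chi> V z)
        = (\<Sum>z\<in>B. \<kappa> * complex_of_real c * (cnj (Psi B A z) * psi0 \<chi> B A z) - \<kappa> * complex_of_real s * (cnj (Psi B A z) * psi1 \<chi> B A z))"
      by (rule sum.cong[OF refl]) (simp add: SV algebra_simps)
    also have "\<dots> = \<kappa> * complex_of_real c * (\<Sum>z\<in>B. cnj (Psi B A z) * psi0 \<chi> B A z) - \<kappa> * complex_of_real s * (\<Sum>z\<in>B. cnj (Psi B A z) * psi1 \<chi> B A z)"
      by (simp add: sum_subtractf sum_distrib_left)
    also have "\<dots> = \<kappa> * (- complex_of_real s * complex_of_real a + complex_of_real c * complex_of_real (1 - a))"
      by (simp add: ampC1 ampC0[OF B U] a_def algebra_simps)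
    finally show ?thesis .
  qed
  show ?case
  proof
    fix x assume x: "x \<in> B"
    have "(Q_op B A \<chi> ^^ Suc j) (\<lambda>x. \<kappa> * Psi B A x) x = Q_op B A \<chi> V x" by (simp add: V_def)
    also have "\<dots> = 2 * Psi B A x * (\<Sum>z\<in>B. cnj (Psi B A z) * S_chi \<chi> V z) - S_chi \<chi> V x"
      by (rule Q_formula[OF B U x])
    also have "\<dots> = \<kappa> * (complex_of_real (fst (sc a (Suc j))) * psi1 \<chi> B A x
            + complex_of_real (snd (sc a (Suc j))) * psi0 \<chi> B A x)"
      unfolding inner SV[OF x]
      by (cases "\<chi> (int x) = 1") (simp_all add: psi1_def psi0_def s_def c_def algebra_simps)
    finally show "(Q_op B A \<chi> ^^ Suc j) (\<lambda>x. \<kappa> * Psi B A x) x = \<kappa> * (complex_of_real (fst (sc (amp B A \<chi>) (Suc j))) * psi1 \<chi> B A x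
            + complex_of_real (snd (sc (amp B A \<chi>) (Suc j))) * psi0 \<chi> B A x)" by (simp add: a_def)
  qed
qed



lemma QFT_cis: "QFT M y x = cis (2 * pi * real x * real y / real M) / complex_of_real (sqrt (real M))"
proof -
  have "exp (2 * complex_of_real pi * \<i> * of_nat x * of_nat y / of_nat M) = cis (2 * pi * real x * real y / real M)"
    unfolding cis_conv_exp by (rule arg_cong[where f=exp]) (simp add: algebra_simps)
  thus ?thesis by (simp add: QFT_def)
qed

lemma first_stage: assumes "M \<ge> 1"
  shows "on_first M (QFT M) (init_state B A) (j, x') = (1 / complex_of_real (sqrt (real M))) * Psi B A x'"
proof -
  have "on_first M (QFT M) (init_state B A) (j, x') = (\<Sum>l<M. QFT M j l * (ket 0 l * Psi B A x'))"
    by (simp add: on_first_def init_state_def)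
  also have "\<dots> = (\<Sum>l<M. if l = 0 then QFT M j 0 * Psi B A x' else 0)"
    by (rule sum.cong[OF refl]) (simp add: ket_def)
  also have "\<dots> = QFT M j 0 * Psi B A x'" using assms by (simp add: sum.delta')
  also have "\<dots> = (1 / complex_of_real (sqrt (real M))) * Psi B A x'" by (simp add: QFT_cis)
  finally show ?thesis .
qed


lemma final_formula:
  assumes B: "finite B" "0 \<in> B" and chi: "\<forall>x. \<chi> x \<in> {0, 1}" and U: "unitary_on B A" and M: "M \<ge> 1"
    and x: "x \<in> B"
  shows "final_state B A \<chi> M (y, x) = (1 / of_nat M) *
     ((\<Sum>j<M. cis (- (2 * pi * real j * real y / real M)) * complex_of_real (fst (sc (amp B A \<chi>) j))) * psi1 \<chi> B A x
      + (\<Sum>j<M. cis (- (2 * pi * real j * real y / real M)) * complex_of_real (snd (sc (amp B A \<chi>) j))) * psi0 \<chi> B A x)"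
proof -
  define \<kappa> where "\<kappa> = 1 / complex_of_real (sqrt (real M))"
  define a where "a = amp B A \<chi>"
  have fs: "(\<lambda>x'. on_first M (QFT M) (init_state B A) (j, x')) = (\<lambda>x'. \<kappa> * Psi B A x')" for j
    using first_stage[OF M] by (simp add: \<kappa>_def fun_eq_iff)
  have L: "Lambda (Q_op B A \<chi>) (on_first M (QFT M) (init_state B A)) (j, x)
      = \<kappa> * (complex_of_real (fst (sc a j)) * psi1 \<chi> B A x + complex_of_real (snd (sc a j)) * psi0 \<chi> B A x)" for j
    unfolding Lambda_def using Qpow[OF B chi U, of j \<kappa>] x fs[of j] by (simp add: a_def)
  have kk: "cnj (QFT M j y) * \<kappa> = (1 / of_nat M) * cis (- (2 * pi * real j * real y / real M))" for j
  proof -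
    have "cnj (QFT M j y) = cis (- (2 * pi * real y * real j / real M)) / complex_of_real (sqrt (real M))"
      by (simp add: QFT_cis cis_cnj)
    moreover have "complex_of_real (sqrt (real M)) * complex_of_real (sqrt (real M)) = of_nat M"
    proof -
      have "sqrt (real M) * sqrt (real M) = real M" by simp
      hence "complex_of_real (sqrt (real M) * sqrt (real M)) = complex_of_real (real M)" by (rule arg_cong)
      thus ?thesis by (simp only: of_real_mult of_real_of_nat_eq)
    qed
    ultimately show ?thesis by (simp add: \<kappa>_def algebra_simps)
  qed
  have "final_state B A \<chi> M (y, x) = (\<Sum>j<M. cnj (QFT M j y) * Lambda (Q_op B A \<chi>) (on_first M (QFT M) (init_state B A)) (j, x))"
    by (simp add: final_state_def on_first_def QFT_inv_def Defs.adjoint_def)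
  also have "\<dots> = (\<Sum>j<M. (1 / of_nat M) * (cis (- (2 * pi * real j * real y / real M)) * complex_of_real (fst (sc a j)) * psi1 \<chi> B A x
      + cis (- (2 * pi * real j * real y / real M)) * complex_of_real (snd (sc a j)) * psi0 \<chi> B A x))"
  proof (rule sum.cong[OF refl])
    fix j
    have "cnj (QFT M j y) * Lambda (Q_op B A \<chi>) (on_first M (QFT M) (init_state B A)) (j, x)
        = (cnj (QFT M j y) * \<kappa>) * (complex_of_real (fst (sc a j)) * psi1 \<chi> B A x + complex_of_real (snd (sc a j)) * psi0 \<chi> B A x)"
      unfolding L by (simp add: mult.assoc)
    also have "\<dots> = (1 / of_nat M) * (cis (- (2 * pi * real j * real y / real M)) * complex_of_real (fst (sc a j)) * psi1 \<chi> B A x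
      + cis (- (2 * pi * real j * real y / real M)) * complex_of_real (snd (sc a j)) * psi0 \<chi> B A x)"
      unfolding kk by (simp add: algebra_simps)
    finally show "cnj (QFT M j y) * Lambda (Q_op B A \<chi>) (on_first M (QFT M) (init_state B A)) (j, x) = \<dots>" .
  qed
  also have "\<dots> = (1 / of_nat M) *
     ((\<Sum>j<M. cis (- (2 * pi * real j * real y / real M)) * complex_of_real (fst (sc a j))) * psi1 \<chi> B A x
      + (\<Sum>j<M. cis (- (2 * pi * real j * real y / real M)) * complex_of_real (snd (sc a j))) * psi0 \<chi> B A x)"
    by (simp only: sum_distrib_left[symmetric] sum.distrib sum_distrib_right[symmetric])
  finally show ?thesis by (simp add: a_def)
qed


lemma meas_formula:
  assumes B: "finite B" "0 \<in> B" and chi: "\<forall>x. \<chi> x \<in> {0, 1}" and U: "unitary_on B A" and M: "M \<ge> 1"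
  shows "meas_prob B A \<chi> M y =
     ((cmod (\<Sum>j<M. cis (- (2 * pi * real j * real y / real M)) * complex_of_real (fst (sc (amp B A \<chi>) j))))^2 * amp B A \<chi>
    + (cmod (\<Sum>j<M. cis (- (2 * pi * real j * real y / real M)) * complex_of_real (snd (sc (amp B A \<chi>) j))))^2 * (1 - amp B A \<chi>))
     / (real M)^2"
proof -
  define S1 where "S1 = (\<Sum>j<M. cis (- (2 * pi * real j * real y / real M)) * complex_of_real (fst (sc (amp B A \<chi>) j)))"
  define S0 where "S0 = (\<Sum>j<M. cis (- (2 * pi * real j * real y / real M)) * complex_of_real (snd (sc (amp B A \<chi>) j)))"
  have "meas_prob B A \<chi> M y = (\<Sum>x\<in>B. (cmod ((1 / of_nat M) * (S1 * psi1 \<chi> B A x + S0 * psi0 \<chi> B A x)))^2)"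
    unfolding meas_prob_def S1_def S0_def
    by (rule sum.cong[OF refl]) (simp only: final_formula[OF B chi U M])
  also have "\<dots> = (\<Sum>x\<in>B. (1 / (real M)^2) * ((cmod S1)^2 * (if \<chi> (int x) = 1 then (cmod (Psi B A x))^2 else 0)
        + (cmod S0)^2 * (if \<chi> (int x) = 1 then 0 else (cmod (Psi B A x))^2)))"
    by (rule sum.cong[OF refl]) (auto simp: psi1_def psi0_def norm_mult power_mult_distrib norm_divide power_divide)
  also have "\<dots> = (1 / (real M)^2) * ((cmod S1)^2 * amp B A \<chi> + (cmod S0)^2 * (1 - amp B A \<chi>))"
  proof -
    have "(\<Sum>x\<in>B. (1 / (real M)^2) * ((cmod S1)^2 * (if \<chi> (int x) = 1 then (cmod (Psi B A x))^2 else 0)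
        + (cmod S0)^2 * (if \<chi> (int x) = 1 then 0 else (cmod (Psi B A x))^2)))
      = (1 / (real M)^2) * ((cmod S1)^2 * (\<Sum>x\<in>B. if \<chi> (int x) = 1 then (cmod (Psi B A x))^2 else 0)
        + (cmod S0)^2 * (\<Sum>x\<in>B. if \<chi> (int x) = 1 then 0 else (cmod (Psi B A x))^2))"
      by (simp only: sum_distrib_left[symmetric] sum.distrib)
    thus ?thesis by (simp only: amp_eq[symmetric] amp_bad[OF B U])
  qed
  finally show ?thesis by (simp add: S1_def S0_def)
qed



lemma sc_trig: assumes "a = (sin t)^2"
  shows "sin t * fst (sc a j) = sin ((2 * real j + 1) * t) \<and> cos t * snd (sc a j) = cos ((2 * real j + 1) * t)"
proof (induction j)
  case 0 then show ?case by simp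
next
  case (Suc j)
  define s where "s = fst (sc a j)"
  define c where "c = snd (sc a j)"
  define A where "A = (2 * real j + 1) * t"
  have IH: "sin t * s = sin A" "cos t * c = cos A" using Suc by (simp_all add: s_def c_def A_def)
  have A2: "(2 * real (Suc j) + 1) * t = A + 2 * t" by (simp add: A_def algebra_simps)
  have pyth: "(sin t)^2 + (cos t)^2 = 1" by simp
  have e1: "sin t * ((1 - 2 * a) * s + 2 * (1 - a) * c) = sin (A + 2 * t)"
  proof -
    have "sin (A + 2 * t) = (sin t * s) * ((cos t)^2 - (sin t)^2) + (cos t * c) * (2 * sin t * cos t)"
      by (simp add: sin_add IH sin_double cos_double)
    thus ?thesis unfolding assms using pyth by algebra
  qed
  have e2: "cos t * (- 2 * a * s + (1 - 2 * a) * c) = cos (A + 2 * t)"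
  proof -
    have "cos (A + 2 * t) = (cos t * c) * ((cos t)^2 - (sin t)^2) - (sin t * s) * (2 * sin t * cos t)"
      by (simp add: cos_add IH sin_double cos_double)
    thus ?thesis unfolding assms using pyth by algebra
  qed
  show ?case unfolding A2 using e1 e2 by (simp add: s_def c_def)
qed

lemma cis_sin: "complex_of_real (sin b) = (cis b - cis (-b)) / (2 * \<i>)"
  by (simp add: complex_eq_iff)

lemma cis_cos: "complex_of_real (cos b) = (cis b + cis (-b)) / 2"
  by (simp add: complex_eq_iff)

lemma parallelogram_c: "(cmod (p + n))^2 + (cmod (p - n))^2 = 2 * (cmod p)^2 + 2 * (cmod n)^2"
  unfolding cmod_power2 by (simp add: power2_eq_square algebra_simps)

lemma PN: "(cmod (\<Sum>j<M. cis (e j) * complex_of_real (sin (b j))))^2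
         + (cmod (\<Sum>j<M. cis (e j) * complex_of_real (cos (b j))))^2
       = ((cmod (\<Sum>j<M. cis (e j + b j)))^2 + (cmod (\<Sum>j<M. cis (e j - b j)))^2) / 2"
proof -
  define P where "P = (\<Sum>j<M. cis (e j + b j))"
  define N where "N = (\<Sum>j<M. cis (e j - b j))"
  have X: "(\<Sum>j<M. cis (e j) * complex_of_real (sin (b j))) = (P - N) / (2 * \<i>)"
  proof -
    have "cis (e j) * complex_of_real (sin (b j)) = (cis (e j + b j) - cis (e j - b j)) / (2 * \<i>)" for j
    proof -
      have h1: "cis (e j) * cis (b j) = cis (e j + b j)" by (rule cis_mult)
      have h2: "cis (e j) * cis (- b j) = cis (e j - b j)" using cis_mult[of "e j" "- b j"] by simp
      show ?thesis unfolding cis_sin by (simp only: times_divide_eq_right right_diff_distrib h1 h2)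
    qed
    hence "(\<Sum>j<M. cis (e j) * complex_of_real (sin (b j))) = (\<Sum>j<M. (cis (e j + b j) - cis (e j - b j)) / (2 * \<i>))"
      by simp
    also have "\<dots> = (P - N) / (2 * \<i>)" unfolding P_def N_def
      by (simp only: sum_divide_distrib[symmetric] sum_subtractf)
    finally show ?thesis .
  qed
  have Y: "(\<Sum>j<M. cis (e j) * complex_of_real (cos (b j))) = (P + N) / 2"
  proof -
    have "cis (e j) * complex_of_real (cos (b j)) = (cis (e j + b j) + cis (e j - b j)) / 2" (is "?l j = ?r j") for j
    proof -
      have h1: "cis (e j) * cis (b j) = cis (e j + b j)" by (rule cis_mult)
      have h2: "cis (e j) * cis (- b j) = cis (e j - b j)" using cis_mult[of "e j" "- b j"] by simp
      show ?thesis unfolding cis_cos by (simp only: times_divide_eq_right distrib_left h1 h2)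
    qed
    hence "(\<Sum>j<M. cis (e j) * complex_of_real (cos (b j))) = (\<Sum>j<M. (cis (e j + b j) + cis (e j - b j)) / 2)"
      by (intro sum.cong refl) assumption
    also have "\<dots> = (P + N) / 2" unfolding P_def N_def
      by (simp only: sum_divide_distrib[symmetric] sum.distrib)
    finally show ?thesis .
  qed
  show ?thesis unfolding X Y P_def[symmetric] N_def[symmetric]
    using parallelogram_c[of P N] by (simp add: norm_divide power_divide norm_mult)
qed

lemma cmod_shift: "cmod (\<Sum>j<M. cis (u + real j * t)) = cmod (Fs M t)"
proof -
  have "(\<Sum>j<M. cis (u + real j * t)) = cis u * Fs M t"
    by (simp add: Fs_def sum_distrib_left cis_mult)
  thus ?thesis by (simp add: norm_mult)
qed

lemma FsFF: "M \<ge> 1 \<Longrightarrow> (cmod (Fs M t))^2 = (real M)^2 * FF M t"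
  by (simp add: FF_def)



lemma meas_Gw:
  assumes B: "finite B" "0 \<in> B" and chi: "\<forall>x. \<chi> x \<in> {0, 1}" and U: "unitary_on B A" and M: "M \<ge> 1"
  shows "meas_prob B A \<chi> M y = Gw M (real M * arcsin (sqrt (amp B A \<chi>)) / pi) (int y) / 2
                              + Gw M (- (real M * arcsin (sqrt (amp B A \<chi>)) / pi)) (int y) / 2"
proof -
  define a where "a = amp B A \<chi>"
  define th where "th = arcsin (sqrt a)"
  define w where "w = real M * th / pi"
  have a01: "0 \<le> a" "a \<le> 1" using amp_range[OF B U] by (simp_all add: a_def)
  have sth: "sin th = sqrt a" unfolding th_def
  proof (rule sin_arcsin)
    show "- 1 \<le> sqrt a" using a01 by (meson neg_le_0_iff_le order_trans real_sqrt_ge_zero zero_le_one)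
    show "sqrt a \<le> 1" using a01 by simp
  qed
  have a_sin: "a = (sin th)^2" using sth a01 by simp
  have Mp: "real M > 0" using M by simp
  define e where "e j = - (2 * pi * real j * real y / real M)" for j
  define b where "b j = (2 * real j + 1) * th" for j
  define S1 where "S1 = (\<Sum>j<M. cis (e j) * complex_of_real (fst (sc a j)))"
  define S0 where "S0 = (\<Sum>j<M. cis (e j) * complex_of_real (snd (sc a j)))"
  have m: "meas_prob B A \<chi> M y = ((cmod S1)^2 * a + (cmod S0)^2 * (1 - a)) / (real M)^2"
    using meas_formula[OF B chi U M, of y] by (simp add: S1_def S0_def e_def a_def)
  have c1: "(cmod S1)^2 * a = (cmod (\<Sum>j<M. cis (e j) * complex_of_real (sin (b j))))^2"
  proof -
    have "S1 * complex_of_real (sin th) = (\<Sum>j<M. cis (e j) * complex_of_real (sin (b j)))"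
      unfolding S1_def sum_distrib_right
    proof (rule sum.cong[OF refl])
      fix j
      have st: "sin th * fst (sc a j) = sin (b j)" using sc_trig[OF a_sin, of j] by (simp add: b_def)
      have "cis (e j) * complex_of_real (fst (sc a j)) * complex_of_real (sin th) = cis (e j) * complex_of_real (sin th * fst (sc a j))"
        by (simp add: algebra_simps)
      also have "\<dots> = cis (e j) * complex_of_real (sin (b j))" by (simp only: st)
      finally show "cis (e j) * complex_of_real (fst (sc a j)) * complex_of_real (sin th) = cis (e j) * complex_of_real (sin (b j))" .
    qed
    moreover have "(cmod (S1 * complex_of_real (sin th)))^2 = (cmod S1)^2 * (sin th)^2"
      by (simp add: norm_mult power_mult_distrib)
    ultimately have "(cmod (\<Sum>j<M. cis (e j) * complex_of_real (sin (b j))))^2 = (cmod S1)^2 * (sin th)^2"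
      by simp
    thus ?thesis using a_sin by simp
  qed
  have c0: "(cmod S0)^2 * (1 - a) = (cmod (\<Sum>j<M. cis (e j) * complex_of_real (cos (b j))))^2"
  proof -
    have "S0 * complex_of_real (cos th) = (\<Sum>j<M. cis (e j) * complex_of_real (cos (b j)))"
      unfolding S0_def sum_distrib_right
    proof (rule sum.cong[OF refl])
      fix j
      have st: "cos th * snd (sc a j) = cos (b j)" using sc_trig[OF a_sin, of j] by (simp add: b_def)
      have "cis (e j) * complex_of_real (snd (sc a j)) * complex_of_real (cos th) = cis (e j) * complex_of_real (cos th * snd (sc a j))"
        by (simp add: algebra_simps)
      also have "\<dots> = cis (e j) * complex_of_real (cos (b j))" by (simp only: st)
      finally show "cis (e j) * complex_of_real (snd (sc a j)) * complex_of_real (cos th) = cis (e j) * complex_of_real (cos (b j))" .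
    qed
    moreover have "(cmod (S0 * complex_of_real (cos th)))^2 = (cmod S0)^2 * (cos th)^2"
      by (simp add: norm_mult power_mult_distrib)
    ultimately have "(cmod (\<Sum>j<M. cis (e j) * complex_of_real (cos (b j))))^2 = (cmod S0)^2 * (cos th)^2"
      by simp
    moreover have "(cos th)^2 = 1 - a" using a_sin by (simp add: cos_squared_eq)
    ultimately show ?thesis by simp
  qed
  have P: "(cmod (\<Sum>j<M. cis (e j + b j)))^2 = (real M)^2 * Gw M w (int y)"
  proof -
    have ee: "(\<Sum>j<M. cis (e j + b j)) = (\<Sum>j<M. cis (th + real j * (2 * th - 2 * pi * real y / real M)))"
      by (rule sum.cong[OF refl], rule arg_cong[where f=cis]) (use Mp in \<open>simp add: e_def b_def field_simps\<close>)
    have "cmod (\<Sum>j<M. cis (e j + b j)) = cmod (Fs M (2 * th - 2 * pi * real y / real M))"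
      unfolding ee by (rule cmod_shift)
    moreover have "Gw M w (int y) = FF M (2 * th - 2 * pi * real y / real M)"
    proof -
      have "2 * pi * (real_of_int (int y) - w) / real M = - (2 * th - 2 * pi * real y / real M)"
        using Mp by (simp add: w_def field_simps)
      thus ?thesis using FF_even[of M "2 * th - 2 * pi * real y / real M"] by (simp add: Gw_def)
    qed
    ultimately show ?thesis using FsFF[OF M] by simp
  qed
  have N: "(cmod (\<Sum>j<M. cis (e j - b j)))^2 = (real M)^2 * Gw M (- w) (int y)"
  proof -
    have ee: "(\<Sum>j<M. cis (e j - b j)) = (\<Sum>j<M. cis (- th + real j * (- 2 * th - 2 * pi * real y / real M)))"
      by (rule sum.cong[OF refl], rule arg_cong[where f=cis]) (use Mp in \<open>simp add: e_def b_def field_simps\<close>)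
    have "cmod (\<Sum>j<M. cis (e j - b j)) = cmod (Fs M (- 2 * th - 2 * pi * real y / real M))"
      unfolding ee by (rule cmod_shift)
    moreover have "Gw M (- w) (int y) = FF M (- 2 * th - 2 * pi * real y / real M)"
    proof -
      have "2 * pi * (real_of_int (int y) - (- w)) / real M = - (- 2 * th - 2 * pi * real y / real M)"
        using Mp by (simp add: w_def field_simps)
      thus ?thesis using FF_even[of M "- 2 * th - 2 * pi * real y / real M"] by (simp add: Gw_def)
    qed
    ultimately show ?thesis using FsFF[OF M] by simp
  qed
  have "meas_prob B A \<chi> M y = ((real M)^2 * Gw M w (int y) + (real M)^2 * Gw M (- w) (int y)) / 2 / (real M)^2"
    unfolding m c1 c0 PN P N by simp
  also have "\<dots> = Gw M w (int y) / 2 + Gw M (- w) (int y) / 2" using Mp by (simp add: field_simps)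
  finally show ?thesis by (simp add: w_def th_def a_def)
qed



lemma Lsin: assumes a: "0 \<le> a" "a \<le> 1" and k: "0 \<le> k" and M: "M \<ge> 1"
  and x: "\<bar>x - arcsin (sqrt a)\<bar> \<le> k * pi / real M"
  shows "\<bar>(sin x)^2 - a\<bar> \<le> 2 * pi * k * sqrt (a * (1 - a)) / real M + k^2 * pi^2 / (real M)^2"
proof -
  define th where "th = arcsin (sqrt a)"
  define e where "e = x - th"
  have sth: "sin th = sqrt a" unfolding th_def
  proof (rule sin_arcsin)
    show "- 1 \<le> sqrt a" using a by (meson neg_le_0_iff_le order_trans real_sqrt_ge_zero zero_le_one)
    show "sqrt a \<le> 1" using a by simp
  qed
  have cth: "cos th = sqrt (1 - a)" unfolding th_def
  proof -
    have "- 1 \<le> sqrt a" using a by (meson neg_le_0_iff_le order_trans real_sqrt_ge_zero zero_le_one)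
    thus "cos (arcsin (sqrt a)) = sqrt (1 - a)" using cos_arcsin[of "sqrt a"] a by simp
  qed
  have s2: "sin (2 * th) = 2 * sqrt (a * (1 - a))" by (simp add: sin_double sth cth real_sqrt_mult)
  have s2p: "sin (2 * th) \<ge> 0" using s2 a by simp
  have xe: "x = th + e" by (simp add: e_def)
  have "(sin x)^2 - a = (sin x)^2 - (sin th)^2" using sth a by simp
  also have "\<dots> = sin (x + th) * sin (x - th)"
  proof -
    have "sin (x + th) * sin (x - th) = (sin x * cos th + cos x * sin th) * (sin x * cos th - cos x * sin th)"
      by (simp add: sin_add sin_diff)
    also have "\<dots> = (sin x)^2 - (sin th)^2"
      using sin_cos_squared_add[of x] sin_cos_squared_add[of th] by algebra
    finally show ?thesis by simp
  qed
  also have "\<dots> = (sin (2 * th) * cos e + cos (2 * th) * sin e) * sin e"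
  proof -
    have h1: "x + th = 2 * th + e" by (simp add: e_def)
    have h2: "x - th = e" by (simp add: e_def)
    show ?thesis unfolding h1 h2 sin_add ..
  qed
  finally have eq: "(sin x)^2 - a = (sin (2 * th) * cos e + cos (2 * th) * sin e) * sin e" .
  have "\<bar>(sin x)^2 - a\<bar> \<le> (sin (2 * th) * \<bar>cos e\<bar> + \<bar>cos (2 * th)\<bar> * \<bar>sin e\<bar>) * \<bar>sin e\<bar>"
    unfolding eq abs_mult using s2p
    by (intro mult_right_mono) (auto intro: order_trans[OF abs_triangle_ineq] simp: abs_mult)
  also have "\<dots> \<le> (sin (2 * th) * 1 + 1 * \<bar>e\<bar>) * \<bar>e\<bar>"
    using s2p abs_sin_x_le_abs_x[of e]
    by (intro mult_mono add_mono mult_left_mono) (auto simp: abs_cos_le_one)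
  also have "\<dots> \<le> (sin (2 * th) + k * pi / real M) * (k * pi / real M)"
    using x s2p by (intro mult_mono add_mono) (auto simp: e_def th_def)
  also have "\<dots> = 2 * pi * k * sqrt (a * (1 - a)) / real M + k^2 * pi^2 / (real M)^2"
    unfolding s2 using M by (simp add: power2_eq_square field_simps)
  finally show ?thesis .
qed

lemma est_split:
  assumes B: "finite B" "0 \<in> B" and chi: "\<forall>x. \<chi> x \<in> {0, 1}" and U: "unitary_on B A" and M: "M \<ge> 1"
  shows "est_prob B A \<chi> M P =
     (\<Sum>y<M. if P (est_output M y) then Gw M (real M * arcsin (sqrt (amp B A \<chi>)) / pi) (int y) else 0) / 2
   + (\<Sum>y<M. if P (est_output M y) then Gw M (- (real M * arcsin (sqrt (amp B A \<chi>)) / pi)) (int y) else 0) / 2"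
proof -
  have set: "{y. y < M \<and> P (est_output M y)} = {y \<in> {..<M}. P (est_output M y)}" by auto
  have "est_prob B A \<chi> M P = (\<Sum>y<M. if P (est_output M y) then meas_prob B A \<chi> M y else 0)"
    unfolding est_prob_def set by (rule sum.inter_filter) simp
  also have "\<dots> = (\<Sum>y<M. (if P (est_output M y) then Gw M (real M * arcsin (sqrt (amp B A \<chi>)) / pi) (int y) else 0) / 2
     + (if P (est_output M y) then Gw M (- (real M * arcsin (sqrt (amp B A \<chi>)) / pi)) (int y) else 0) / 2)"
    by (rule sum.cong[OF refl]) (simp add: meas_Gw[OF B chi U M])
  also have "\<dots> = (\<Sum>y<M. if P (est_output M y) then Gw M (real M * arcsin (sqrt (amp B A \<chi>)) / pi) (int y) else 0) / 2
   + (\<Sum>y<M. if P (est_output M y) then Gw M (- (real M * arcsin (sqrt (amp B A \<chi>)) / pi)) (int y) else 0) / 2"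
    by (simp only: sum.distrib sum_divide_distrib)
  finally show ?thesis .
qed

lemma out_per: "est_output M y = (sin (pi * real_of_int (int y) / real M))^2"
  by (simp add: est_output_def)

lemma sin2_per: assumes "M \<ge> 1"
  shows "(sin (pi * real_of_int (n + int M) / real M))^2 = (sin (pi * real_of_int n / real M))^2"
proof -
  have "pi * real_of_int (n + int M) / real M = pi * real_of_int n / real M + pi"
    using assms by (simp add: field_simps)
  thus ?thesis by (simp add: sin_add)
qed



lemma near_lemma: assumes a: "0 \<le> a" "a \<le> 1" and k: "0 \<le> k" and M: "M \<ge> 1"
  and n: "\<bar>real_of_int n - s * (real M * arcsin (sqrt a) / pi)\<bar> \<le> k" and s: "s = 1 \<or> s = -1"
  shows "\<bar>(sin (pi * real_of_int n / real M))^2 - a\<bar> \<le> 2 * pi * k * sqrt (a * (1 - a)) / real M + k^2 * pi^2 / (real M)^2"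
proof -
  define th where "th = arcsin (sqrt a)"
  have Mp: "real M > 0" using M by simp
  have eq: "s * (pi * real_of_int n / real M) - th = (pi / real M) * (s * real_of_int n - th * real M / pi)"
    using Mp by (simp add: field_simps)
  have "\<bar>s * real_of_int n - th * real M / pi\<bar> = \<bar>real_of_int n - s * (real M * th / pi)\<bar>"
    using s by (auto simp: abs_minus_commute algebra_simps)
  hence le: "\<bar>s * real_of_int n - th * real M / pi\<bar> \<le> k" using n by (simp add: th_def)
  have "\<bar>s * (pi * real_of_int n / real M) - th\<bar> = (pi / real M) * \<bar>s * real_of_int n - th * real M / pi\<bar>"
    unfolding eq abs_mult using Mp by simp
  also have "\<dots> \<le> (pi / real M) * k" using le Mp by (intro mult_left_mono) auto
  finally have "\<bar>s * (pi * real_of_int n / real M) - th\<bar> \<le> (pi / real M) * k" .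
  hence x: "\<bar>s * (pi * real_of_int n / real M) - arcsin (sqrt a)\<bar> \<le> k * pi / real M" by (simp add: th_def mult.commute)
  have "(sin (s * (pi * real_of_int n / real M)))^2 = (sin (pi * real_of_int n / real M))^2"
    using s by auto
  thus ?thesis using Lsin[OF a k M x] by simp
qed

theorem theorem6:
  fixes B :: "nat set" and A :: mat and \<chi> :: "int \<Rightarrow> nat" and M :: nat
  assumes "finite B" and "0 \<in> B"
    and "\<forall>x. \<chi> x \<in> {0, 1}"
    and "unitary_on B A"
    and "M \<ge> 1"
  defines "a \<equiv> amp B A \<chi>"
  shows "(\<forall>y<M. 0 \<le> est_output M y \<and> est_output M y \<le> 1)
    \<and> est_prob B A \<chi> M (\<lambda>t. \<bar>t - a\<bar> \<le> 2 * pi * 1 * sqrt (a * (1 - a)) / real M + 1 ^ 2 * pi ^ 2 / (real M)^2)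
        \<ge> 8 / pi ^ 2
    \<and> (\<forall>k::nat. k \<ge> 2 \<longrightarrow>
        est_prob B A \<chi> M (\<lambda>t. \<bar>t - a\<bar> \<le> 2 * pi * real k * sqrt (a * (1 - a)) / real M + (real k)^2 * pi ^ 2 / (real M)^2)
          > 1 - 1 / (2 * (real k - 1)))
    \<and> (a = 0 \<longrightarrow> est_prob B A \<chi> M (\<lambda>t. t = 0) = 1)
    \<and> (a = 1 \<and> even M \<longrightarrow> est_prob B A \<chi> M (\<lambda>t. t = 1) = 1)"
proof -
  note B = assms(1,2) and chi = assms(3) and U = assms(4) and M = assms(5)
  have a01: "0 \<le> a" "a \<le> 1" using amp_range[OF B U] by (simp_all add: a_def)
  define w where "w = real M * arcsin (sqrt a) / pi"
  have split: "est_prob B A \<chi> M P =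
     (\<Sum>y<M. if P ((sin (pi * real_of_int (int y) / real M))^2) then Gw M w (int y) else 0) / 2
   + (\<Sum>y<M. if P ((sin (pi * real_of_int (int y) / real M))^2) then Gw M (- w) (int y) else 0) / 2" for P
    using est_split[OF B chi U M, of P] by (simp only: out_per w_def a_def)
  have per: "P ((sin (pi * real_of_int (n + int M) / real M))^2) = P ((sin (pi * real_of_int n / real M))^2)" for P n
    by (simp only: sin2_per[OF M])
  have nearP: "\<bar>(sin (pi * real_of_int n / real M))^2 - a\<bar> \<le> 2 * pi * k * sqrt (a * (1 - a)) / real M + k^2 * pi^2 / (real M)^2"
    if "\<bar>real_of_int n - s * w\<bar> \<le> k" "s = 1 \<or> s = -1" "0 \<le> k" for n s and k :: real
    using near_lemma[OF a01 that(3) M _ that(2), of n] that(1) by (simp add: w_def)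
  have part1: "\<forall>y<M. 0 \<le> est_output M y \<and> est_output M y \<le> 1"
    by (simp add: est_output_def abs_square_le_1)
  have part2: "est_prob B A \<chi> M (\<lambda>t. \<bar>t - a\<bar> \<le> 2 * pi * 1 * sqrt (a * (1 - a)) / real M + 1 ^ 2 * pi ^ 2 / (real M)^2)
        \<ge> 8 / pi ^ 2"
  proof -
    let ?P = "\<lambda>t. \<bar>t - a\<bar> \<le> 2 * pi * 1 * sqrt (a * (1 - a)) / real M + 1 ^ 2 * pi ^ 2 / (real M)^2"
    have c1: "(\<Sum>y<M. if ?P ((sin (pi * real_of_int (int y) / real M))^2) then Gw M w (int y) else 0) \<ge> 8 / pi^2"
      by (rule core1[OF M]) (rule per, rule nearP[of _ 1 1], simp_all)
    have c2: "(\<Sum>y<M. if ?P ((sin (pi * real_of_int (int y) / real M))^2) then Gw M (- w) (int y) else 0) \<ge> 8 / pi^2"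
      by (rule core1[OF M]) (rule per, rule nearP[of _ "-1" 1], simp_all)
    show ?thesis unfolding split using c1 c2 by linarith
  qed
  have part3: "\<forall>k::nat. k \<ge> 2 \<longrightarrow>
        est_prob B A \<chi> M (\<lambda>t. \<bar>t - a\<bar> \<le> 2 * pi * real k * sqrt (a * (1 - a)) / real M + (real k)^2 * pi ^ 2 / (real M)^2)
          > 1 - 1 / (2 * (real k - 1))"
  proof (intro allI impI)
    fix k :: nat assume k: "k \<ge> 2"
    let ?P = "\<lambda>t. \<bar>t - a\<bar> \<le> 2 * pi * real k * sqrt (a * (1 - a)) / real M + (real k)^2 * pi ^ 2 / (real M)^2"
    have c1: "(\<Sum>y<M. if ?P ((sin (pi * real_of_int (int y) / real M))^2) then Gw M w (int y) else 0) > 1 - 1 / (2 * (real k - 1))"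
      by (rule core2[OF M k]) (rule per, rule nearP[of _ 1 "real k"], simp_all)
    have c2: "(\<Sum>y<M. if ?P ((sin (pi * real_of_int (int y) / real M))^2) then Gw M (- w) (int y) else 0) > 1 - 1 / (2 * (real k - 1))"
      by (rule core2[OF M k]) (rule per, rule nearP[of _ "-1" "real k"], simp_all)
    show "est_prob B A \<chi> M ?P > 1 - 1 / (2 * (real k - 1))" unfolding split using c1 c2 by linarith
  qed
  have part4: "a = 0 \<longrightarrow> est_prob B A \<chi> M (\<lambda>t. t = 0) = 1"
  proof
    assume a0: "a = 0"
    have w0: "w = real_of_int 0" by (simp add: w_def a0)
    have w0': "- w = real_of_int 0" using w0 by simp
    have c: "(\<Sum>y<M. if (sin (pi * real_of_int (int y) / real M))^2 = 0 then Gw M (real_of_int 0) (int y) else 0) = 1"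
      by (rule core_exact[OF M]) (rule per, simp)
    show "est_prob B A \<chi> M (\<lambda>t. t = 0) = 1" unfolding split w0' unfolding w0 c by simp
  qed
  have part5: "a = 1 \<and> even M \<longrightarrow> est_prob B A \<chi> M (\<lambda>t. t = 1) = 1"
  proof
    assume h: "a = 1 \<and> even M"
    define m where "m = int (M div 2)"
    have Mm: "real M = 2 * real_of_int m" using h by (simp add: m_def real_of_nat_div)
    have w1: "w = real_of_int m" using h Mm by (simp add: w_def)
    have w2: "- w = real_of_int (- m)" using w1 by simp
    have Mp: "real M > 0" using M by simp
    have pm: "pi * real_of_int m / real M = pi / 2" using Mm Mp by (simp add: field_simps)
    have pm2: "pi * real_of_int (- m) / real M = - (pi / 2)" using pm by simp
    have c1: "(\<Sum>y<M. if (sin (pi * real_of_int (int y) / real M))^2 = 1 then Gw M (real_of_int m) (int y) else 0) = 1"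
      by (rule core_exact[OF M]) (rule per, unfold pm, simp)
    have c2: "(\<Sum>y<M. if (sin (pi * real_of_int (int y) / real M))^2 = 1 then Gw M (real_of_int (- m)) (int y) else 0) = 1"
      by (rule core_exact[OF M]) (rule per, unfold pm2, simp)
    show "est_prob B A \<chi> M (\<lambda>t. t = 1) = 1" unfolding split w2 unfolding w1 c1 c2 by simp
  qed
  show ?thesis using part1 part2 part3 part4 part5 by blast
qed


end
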